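(* Let $G$ be a signed digraph none of whose connected components is a signed cycle. Then $\lambda(G)=\max_\ell\lambda(G_\ell)$ and $\beta(G)=\max_\ell\beta(G_\ell)$, where $G_1,\dots,G_k$ are the connected components of $G$, and there exists a degree-bounded finite dynamical system $f:X\to X$ on $G$ such that $f^{\lambda(G)+\beta(G)}$ is a constant map.
   Context: A finite dynamical system (FDS) with $n$ components is a map $f=(f_1,\dots,f_n):X\to X$ where $X=X_1\times\cdots\times X_n$ and each $X_i$ is a nonempty finite interval of integers; $f^k$ is the $k$-fold composition. A signed digraph is a pair $G=(V,E)$ with $E\subseteq V\times V\times\{+,-\}$; $(j,i,s)\in E$ is an arc from $j$ to $i$ of sign $s$ (loops allowed; $G$ may have both a positive and a negative arc from $j$ to $i$, called parallel arcs). Write $G_i$ for the set of $j$ having an arc to $i$. In-degree $d^{\mathrm{in}}_G(i)$ and out-degree $d^{\mathrm{out}}_G(i)$ count arcs entering/leaving $i$, positive and negative arcs counted separately. Connected components are those of the underlying undirected graph. The underlying unsigned digraph $|G|$ has vertex set $V$ and an arc from $j$ to $i$ iff $j\in G_i$; $G$ is a signed cycle if $|G|$ is a directed cycle (through all vertices, each exactly once; a single vertex with a loop counts) and $G$ has no parallel arcs. A strong component is a maximal $U\subseteq V$ with $G[U]$ strongly connected; it is initial if no arc goes from $V\setminus U$ to $U$, trivial if $G[U]$ has one vertex and no arc. $G$ is basic if all its initial strong components are trivial; $\beta(G)=0$ if $G$ is basic, $1$ otherwise. $d_G(j,i)$ is the minimum number of arcs of a directed path from $j$ to $i$ ($0$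 if $j=i$, $\infty$ if none), $d_G(U,i)=\min_{j\in U}d_G(j,i)$, and with $\mathcal I$ the set of initial strong components, $\lambda(G)=\max_{i\in V}\min_{U\in\mathcal I}(d_G(U,i)+|U|)$. The interaction graph of an FDS $f$ is the signed digraph on $\{1,\dots,n\}$ with a positive (resp. negative) arc from $j$ to $i$ iff there is $x\in X$ with $x_j<\max(X_j)$ and $f_i(x+e_j)-f_i(x)$ positive (resp. negative), $e_j$ the $j$-th unit vector; $f$ is an FDS on $G$ if $G$ is its interaction graph. $f$ is degree-bounded if, with $G$ its interaction graph, for every $i$: $|X_i|=2$ if $d^{\mathrm{out}}_G(i)=0<d^{\mathrm{in}}_G(i)$, and $|X_i|\le d^{\mathrm{out}}_G(i)+1$ otherwise. *)

theory Defs
  imports Main "HOL-Library.Extended_Nat" "HOL-Library.FuncSet"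
begin

datatype sign = Pos | Neg

text \<open>A signed digraph is given by a vertex set V and an arc set E of triples
  (j, i, s): an arc from j to i with sign s. It is assumed E \<subseteq> V \<times> V \<times> UNIV.\<close>

definition arcrel :: "(nat \<times> nat \<times> sign) set \<Rightarrow> (nat \<times> nat) set" where
  "arcrel E = {(j, i). \<exists>s. (j, i, s) \<in> E}"

definition induced :: "(nat \<times> nat \<times> sign) set \<Rightarrow> nat set \<Rightarrow> (nat \<times> nat \<times> sign) set" where
  "induced E U = {(j, i, s). (j, i, s) \<in> E \<and> j \<in> U \<and> i \<in> U}"

definition in_deg :: "(nat \<times> nat \<times> sign) set \<Rightarrow> nat \<Rightarrow> nat" where
  "in_deg E i = card {(j, s). (j, i, s) \<in> E}"

definition out_deg :: "(nat \<times> nat \<times> sign) set \<Rightarrow> nat \<Rightarrow> nat" where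
  "out_deg E j = card {(i, s). (j, i, s) \<in> E}"

definition ucomps :: "nat set \<Rightarrow> (nat \<times> nat \<times> sign) set \<Rightarrow> nat set set" where
  "ucomps V E = (\<lambda>v. {u \<in> V. (v, u) \<in> (arcrel E \<union> (arcrel E)\<inverse>)\<^sup>*}) ` V"

definition signed_cycle :: "nat set \<Rightarrow> (nat \<times> nat \<times> sign) set \<Rightarrow> bool" where
  "signed_cycle V E \<longleftrightarrow>
     (\<exists>vs. vs \<noteq> [] \<and> distinct vs \<and> set vs = V \<and>
        arcrel E = {(vs ! k, vs ! ((k + 1) mod length vs)) | k. k < length vs}) \<and>
     (\<forall>j i. \<not> ((j, i, Pos) \<in> E \<and> (j, i, Neg) \<in> E))"

definition strongly_conn :: "(nat \<times> nat \<times> sign) set \<Rightarrow> nat set \<Rightarrow> bool" where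
  "strongly_conn E U \<longleftrightarrow> (\<forall>u\<in>U. \<forall>v\<in>U. (u, v) \<in> (arcrel (induced E U))\<^sup>*)"

definition strong_comp :: "nat set \<Rightarrow> (nat \<times> nat \<times> sign) set \<Rightarrow> nat set \<Rightarrow> bool" where
  "strong_comp V E U \<longleftrightarrow> U \<subseteq> V \<and> U \<noteq> {} \<and> strongly_conn E U \<and>
     (\<forall>W. U \<subseteq> W \<and> W \<subseteq> V \<and> strongly_conn E W \<longrightarrow> W = U)"

definition initial_comp :: "nat set \<Rightarrow> (nat \<times> nat \<times> sign) set \<Rightarrow> nat set \<Rightarrow> bool" where
  "initial_comp V E U \<longleftrightarrow> strong_comp V E U \<and>
     (\<forall>j i s. (j, i, s) \<in> E \<and> j \<in> V - U \<and> i \<in> U \<longrightarrow> False)"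

definition trivial_comp :: "(nat \<times> nat \<times> sign) set \<Rightarrow> nat set \<Rightarrow> bool" where
  "trivial_comp E U \<longleftrightarrow> card U = 1 \<and> induced E U = {}"

definition basic :: "nat set \<Rightarrow> (nat \<times> nat \<times> sign) set \<Rightarrow> bool" where
  "basic V E \<longleftrightarrow> (\<forall>U. initial_comp V E U \<longrightarrow> trivial_comp E U)"

definition beta :: "nat set \<Rightarrow> (nat \<times> nat \<times> sign) set \<Rightarrow> nat" where
  "beta V E = (if basic V E then 0 else 1)"

definition gdist :: "(nat \<times> nat \<times> sign) set \<Rightarrow> nat \<Rightarrow> nat \<Rightarrow> enat" where
  "gdist E j i = (if \<exists>k. (j, i) \<in> arcrel E ^^ k
                  then enat (LEAST k. (j, i) \<in> arcrel E ^^ k) else \<infinity>)"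

definition gdist_set :: "(nat \<times> nat \<times> sign) set \<Rightarrow> nat set \<Rightarrow> nat \<Rightarrow> enat" where
  "gdist_set E U i = Min ((\<lambda>j. gdist E j i) ` U)"

definition lam :: "nat set \<Rightarrow> (nat \<times> nat \<times> sign) set \<Rightarrow> enat" where
  "lam V E = Max ((\<lambda>i. Min ((\<lambda>U. gdist_set E U i + enat (card U)) ` {U. initial_comp V E U})) ` V)"

definition state_space :: "nat \<Rightarrow> (nat \<Rightarrow> int) \<Rightarrow> (nat \<Rightarrow> int) \<Rightarrow> (nat \<Rightarrow> int) set" where
  "state_space n a b = PiE {1..n} (\<lambda>i. {a i..b i})"

definition is_FDS :: "nat \<Rightarrow> (nat \<Rightarrow> int) \<Rightarrow> (nat \<Rightarrow> int) \<Rightarrow> ((nat \<Rightarrow> int) \<Rightarrow> (nat \<Rightarrow> int)) \<Rightarrow> bool" where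
  "is_FDS n a b f \<longleftrightarrow> (\<forall>i\<in>{1..n}. a i \<le> b i) \<and>
     (\<forall>x\<in>state_space n a b. f x \<in> state_space n a b)"

definition interaction_graph ::
  "nat \<Rightarrow> (nat \<Rightarrow> int) \<Rightarrow> (nat \<Rightarrow> int) \<Rightarrow> ((nat \<Rightarrow> int) \<Rightarrow> (nat \<Rightarrow> int)) \<Rightarrow> (nat \<times> nat \<times> sign) set" where
  "interaction_graph n a b f = {(j, i, s). j \<in> {1..n} \<and> i \<in> {1..n} \<and>
     (\<exists>x\<in>state_space n a b. x j < b j \<and>
        (case s of Pos \<Rightarrow> f (x(j := x j + 1)) i - f x i > 0
                 | Neg \<Rightarrow> f (x(j := x j + 1)) i - f x i < 0))}"

definition degree_bounded ::
  "nat \<Rightarrow> (nat \<Rightarrow> int) \<Rightarrow> (nat \<Rightarrow> int) \<Rightarrow> ((nat \<Rightarrow> int) \<Rightarrow> (nat \<Rightarrow> int)) \<Rightarrow> bool" where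
  "degree_bounded n a b f \<longleftrightarrow> (let G = interaction_graph n a b f in
     \<forall>i\<in>{1..n}. (if out_deg G i = 0 \<and> 0 < in_deg G i then card {a i..b i} = 2
                  else card {a i..b i} \<le> out_deg G i + 1))"

end

theory Submission
  imports Defs
begin

lemma arcrel_iff: "(j,i) \<in> arcrel E \<longleftrightarrow> (\<exists>s. (j,i,s) \<in> E)"
  by (simp add: arcrel_def)

lemma arcrel_induced: "arcrel (induced E U) = arcrel E \<inter> U \<times> U"
  by (auto simp: arcrel_def induced_def)

lemma induced_induced: "U \<subseteq> C \<Longrightarrow> induced (induced E C) U = induced E U"
  by (auto simp: induced_def)

lemma arcrel_sub: "E \<subseteq> V \<times> V \<times> UNIV \<Longrightarrow> arcrel E \<subseteq> V \<times> V"
  by (auto simp: arcrel_def)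

lemma path_within:
  assumes "(a,b) \<in> R\<^sup>*" "\<And>y. (a,y)\<in>R\<^sup>* \<Longrightarrow> (y,b)\<in>R\<^sup>* \<Longrightarrow> y\<in>U"
  shows "(a,b) \<in> (R \<inter> U \<times> U)\<^sup>*"
  using assms
proof (induction rule: converse_rtrancl_induct)
  case base
  then show ?case by simp
next
  case (step y z)
  have "(z,b) \<in> (R \<inter> U \<times> U)\<^sup>*"
    using step.IH step.prems step.hyps(1) by (meson converse_rtrancl_into_rtrancl)
  moreover have "y \<in> U" using step.prems step.hyps by (meson converse_rtrancl_into_rtrancl rtrancl.rtrancl_refl)
  moreover have "z \<in> U" using step.prems step.hyps by (meson r_into_rtrancl)
  ultimately show ?case using step.hyps(1) by (meson IntI converse_rtrancl_into_rtrancl mem_Sigma_iff)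
qed

lemma strongly_conn_rtrancl:
  "strongly_conn E W \<Longrightarrow> u \<in> W \<Longrightarrow> v \<in> W \<Longrightarrow> (u,v) \<in> (arcrel E)\<^sup>*"
  unfolding strongly_conn_def arcrel_induced
  by (meson Int_lower1 rtrancl_mono subsetD)

lemma exists_initial:
  assumes fin: "finite V" and Esub: "E \<subseteq> V \<times> V \<times> UNIV" and iV: "i \<in> V"
  shows "\<exists>U. initial_comp V E U \<and> (\<exists>u\<in>U. (u,i) \<in> (arcrel E)\<^sup>*)"
proof -
  let ?R = "arcrel E"
  define anc where "anc z = {y \<in> V. (y,z) \<in> ?R\<^sup>*}" for z
  define A where "A = {u\<in>V. (u,i) \<in> ?R\<^sup>*}"
  have finA: "finite A" using fin by (simp add: A_def)
  have "i \<in> A" using iV by (simp add: A_def)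
  define m where "m = Min ((\<lambda>u. card (anc u)) ` A)"
  have "m \<in> (\<lambda>u. card (anc u)) ` A" unfolding m_def using finA \<open>i\<in>A\<close> by (intro Min_in) auto
  then obtain u where uA: "u \<in> A" and um: "card (anc u) = m" by auto
  have umin: "card (anc u) \<le> card (anc u')" if "u' \<in> A" for u'
    unfolding um m_def using finA that by (intro Min_le) auto
  have uV: "u \<in> V" using uA by (simp add: A_def)
  define U where "U = {z \<in> V. (z,u) \<in> ?R\<^sup>* \<and> (u,z) \<in> ?R\<^sup>*}"
  have RV: "?R \<subseteq> V \<times> V" using Esub by (rule arcrel_sub)
  have uU: "u \<in> U" using uV by (simp add: U_def)
  have sc: "strongly_conn E U"
    unfolding strongly_conn_def arcrel_induced
  proof (intro ballI)
    fix z1 z2 assume z1: "z1 \<in> U" and z2: "z2 \<in> U"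
    have p: "(z1,z2) \<in> ?R\<^sup>*" using z1 z2 by (auto simp: U_def intro: rtrancl_trans)
    show "(z1,z2) \<in> (?R \<inter> U \<times> U)\<^sup>*"
    proof (rule path_within[OF p])
      fix y assume a: "(z1,y) \<in> ?R\<^sup>*" and b: "(y,z2) \<in> ?R\<^sup>*"
      have "(y,u) \<in> ?R\<^sup>*" using b z2 by (auto simp: U_def intro: rtrancl_trans)
      moreover have "(u,y) \<in> ?R\<^sup>*" using a z1 by (auto simp: U_def intro: rtrancl_trans)
      moreover have "y \<in> V"
      proof (cases "z1 = y")
        case True then show ?thesis using z1 by (simp add: U_def)
      next
        case False
        then have "(z1,y) \<in> ?R\<^sup>+" using a by (simp add: rtrancl_eq_or_trancl)
        then obtain w where "(w,y) \<in> ?R" by (meson tranclE)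
        then show ?thesis using RV by auto
      qed
      ultimately show "y \<in> U" by (simp add: U_def)
    qed
  qed
  have sccomp: "strong_comp V E U"
    unfolding strong_comp_def
  proof (intro conjI allI impI)
    show "U \<subseteq> V" by (auto simp: U_def)
    show "U \<noteq> {}" using uU by auto
    show "strongly_conn E U" by (rule sc)
    fix W assume W: "U \<subseteq> W \<and> W \<subseteq> V \<and> strongly_conn E W"
    show "W = U"
    proof
      show "U \<subseteq> W" using W by simp
      show "W \<subseteq> U"
      proof
        fix z assume "z \<in> W"
        then have "(z,u) \<in> ?R\<^sup>*" "(u,z) \<in> ?R\<^sup>*" "z \<in> V"
          using W uU strongly_conn_rtrancl by blast+
        then show "z \<in> U" by (simp add: U_def)
      qed
    qed
  qed
  have init: "initial_comp V E U"
    unfolding initial_comp_def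
  proof (intro conjI sccomp allI impI)
    fix j z s assume a: "(j, z, s) \<in> E \<and> j \<in> V - U \<and> z \<in> U"
    then have jz: "(j,z) \<in> ?R" by (auto simp: arcrel_def)
    have zu: "(z,u) \<in> ?R\<^sup>*" using a by (simp add: U_def)
    have ju: "(j,u) \<in> ?R\<^sup>*" using jz zu by auto
    have jA: "j \<in> A" using a ju uA by (auto simp: A_def intro: rtrancl_trans)
    have sub: "anc j \<subseteq> anc u" using ju by (auto simp: anc_def intro: rtrancl_trans)
    have "card (anc u) \<le> card (anc j)" using umin jA .
    moreover have "finite (anc u)" using fin by (simp add: anc_def)
    ultimately have "anc j = anc u" using sub by (simp add: card_seteq)
    moreover have "u \<in> anc u" using uV by (simp add: anc_def)
    ultimately have "u \<in> anc j" by simp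
    then have "(u,j) \<in> ?R\<^sup>*" by (simp add: anc_def)
    then have "j \<in> U" using a ju by (simp add: U_def)
    then show False using a by simp
  qed
  have "(u,i) \<in> ?R\<^sup>*" using uA by (simp add: A_def)
  then show ?thesis using init uU by blast
qed

lemma strong_comp_eq:
  assumes "strong_comp V E U" "strong_comp V E U'" "x \<in> U" "x \<in> U'"
  shows "U = U'"
proof -
  have "strongly_conn E (U \<union> U')"
    unfolding strongly_conn_def
  proof (intro ballI)
    have m1: "(arcrel (induced E U))\<^sup>* \<subseteq> (arcrel (induced E (U \<union> U')))\<^sup>*"
      by (rule rtrancl_mono) (auto simp: arcrel_induced)
    have m2: "(arcrel (induced E U'))\<^sup>* \<subseteq> (arcrel (induced E (U \<union> U')))\<^sup>*"
      by (rule rtrancl_mono) (auto simp: arcrel_induced)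
    have sU: "strongly_conn E U" and sU': "strongly_conn E U'"
      using assms by (auto simp: strong_comp_def)
    fix a b assume a: "a \<in> U \<union> U'" and b: "b \<in> U \<union> U'"
    have ax: "(a,x) \<in> (arcrel (induced E (U \<union> U')))\<^sup>*"
      using a sU sU' assms(3,4) m1 m2 unfolding strongly_conn_def by blast
    have xb: "(x,b) \<in> (arcrel (induced E (U \<union> U')))\<^sup>*"
      using b sU sU' assms(3,4) m1 m2 unfolding strongly_conn_def by blast
    show "(a,b) \<in> (arcrel (induced E (U \<union> U')))\<^sup>*" using ax xb by (rule rtrancl_trans)
  qed
  moreover have "U \<union> U' \<subseteq> V" using assms by (auto simp: strong_comp_def)
  ultimately have "U \<union> U' = U" "U \<union> U' = U'" using assms(1,2) unfolding strong_comp_def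
    by (metis Un_upper1, metis Un_upper2)
  then show ?thesis by simp
qed

lemma initial_closed:
  assumes "initial_comp V E U" "E \<subseteq> V \<times> V \<times> UNIV" "(j,i) \<in> (arcrel E)\<^sup>*" "i \<in> U"
  shows "j \<in> U"
  using assms(3,4)
proof (induction rule: converse_rtrancl_induct)
  case base then show ?case .
next
  case (step y z)
  then have "z \<in> U" by simp
  from step.hyps(1) obtain s where "(y,z,s) \<in> E" by (auto simp: arcrel_def)
  then have "y \<in> V" using assms(2) by auto
  then show ?case using assms(1) \<open>(y,z,s)\<in>E\<close> \<open>z\<in>U\<close> unfolding initial_comp_def by blast
qed

definition closedset :: "nat set \<Rightarrow> (nat \<times> nat \<times> sign) set \<Rightarrow> nat set \<Rightarrow> bool" where
  "closedset V E C \<longleftrightarrow> C \<subseteq> V \<and> (\<forall>j i. (j,i) \<in> arcrel E \<longrightarrow> (j \<in> C \<longleftrightarrow> i \<in> C))"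

lemma closed_fwd:
  assumes "closedset V E C" "(j,i) \<in> (arcrel E)\<^sup>*" "j \<in> C" shows "i \<in> C"
  using assms(2,3)
proof (induction rule: rtrancl_induct)
  case (step y z) then show ?case using assms(1) unfolding closedset_def by blast
qed

lemma closed_bwd:
  assumes "closedset V E C" "(j,i) \<in> (arcrel E)\<^sup>*" "i \<in> C" shows "j \<in> C"
  using assms(2,3)
proof (induction rule: converse_rtrancl_induct)
  case (step y z) then show ?case using assms(1) unfolding closedset_def by blast
qed

lemma sc_closed: "closedset V E C \<Longrightarrow> strongly_conn E W \<Longrightarrow> u \<in> W \<Longrightarrow> u \<in> C \<Longrightarrow> W \<subseteq> C"
proof
  fix w assume "closedset V E C" "strongly_conn E W" "u \<in> W" "u \<in> C" "w \<in> W"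
  then have "(u,w) \<in> (arcrel E)\<^sup>*" by (simp add: strongly_conn_rtrancl)
  then show "w \<in> C" using closed_fwd \<open>closedset V E C\<close> \<open>u\<in>C\<close> by metis
qed

lemma relpow_mono_set: "(R::('a\<times>'a) set) \<subseteq> S \<Longrightarrow> R^^k \<subseteq> S^^k"
  by (induction k) (simp_all add: relcomp_mono)

lemma sc_induced: "U \<subseteq> C \<Longrightarrow> strongly_conn (induced E C) U = strongly_conn E U"
  by (simp add: strongly_conn_def induced_induced)

lemma strong_comp_closed:
  assumes "closedset V E C"
  shows "strong_comp C (induced E C) U \<longleftrightarrow> strong_comp V E U \<and> U \<subseteq> C"
proof
  assume a: "strong_comp C (induced E C) U"
  then have UC: "U \<subseteq> C" "U \<noteq> {}" and sc: "strongly_conn E U"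
    by (auto simp: strong_comp_def sc_induced)
  have CV: "C \<subseteq> V" using assms by (simp add: closedset_def)
  show "strong_comp V E U \<and> U \<subseteq> C"
    unfolding strong_comp_def
  proof (intro conjI allI impI)
    fix W assume W: "U \<subseteq> W \<and> W \<subseteq> V \<and> strongly_conn E W"
    obtain u where "u \<in> U" using UC by auto
    then have "W \<subseteq> C" using sc_closed[OF assms] W UC by blast
    moreover have "\<forall>W. U \<subseteq> W \<and> W \<subseteq> C \<and> strongly_conn (induced E C) W \<longrightarrow> W = U"
      using a unfolding strong_comp_def by blast
    ultimately show "W = U" using W sc_induced by metis
  qed (use UC sc CV in auto)
next
  assume a: "strong_comp V E U \<and> U \<subseteq> C"
  have CV: "C \<subseteq> V" using assms by (simp add: closedset_def)
  show "strong_comp C (induced E C) U"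
    unfolding strong_comp_def
  proof (intro conjI allI impI)
    show "U \<subseteq> C" using a by simp
    show "U \<noteq> {}" using a by (simp add: strong_comp_def)
    show "strongly_conn (induced E C) U" using a by (simp add: strong_comp_def sc_induced)
    fix W assume W: "U \<subseteq> W \<and> W \<subseteq> C \<and> strongly_conn (induced E C) W"
    then have "strongly_conn E W" using sc_induced by metis
    then show "W = U" using a W CV unfolding strong_comp_def by blast
  qed
qed

lemma initial_closed_iff:
  assumes "closedset V E C"
  shows "initial_comp C (induced E C) U \<longleftrightarrow> initial_comp V E U \<and> U \<subseteq> C"
proof -
  have "(\<forall>j i s. (j, i, s) \<in> induced E C \<and> j \<in> C - U \<and> i \<in> U \<longrightarrow> False) \<longleftrightarrow>
        (\<forall>j i s. (j, i, s) \<in> E \<and> j \<in> V - U \<and> i \<in> U \<longrightarrow> False)" if "U \<subseteq> C"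
  proof -
    have "j \<in> C" if "(j, i, s) \<in> E" "i \<in> U" for j i s
      using assms that \<open>U \<subseteq> C\<close> unfolding closedset_def arcrel_def by blast
    moreover have "C \<subseteq> V" using assms by (simp add: closedset_def)
    ultimately show ?thesis using that unfolding induced_def by blast
  qed
  then show ?thesis unfolding initial_comp_def using strong_comp_closed[OF assms]
    by (metis strong_comp_def)
qed

lemma relpow_closed:
  assumes "closedset V E C" "(j,i) \<in> (arcrel E)^^k" "j \<in> C"
  shows "(j,i) \<in> (arcrel (induced E C))^^k"
  using assms(2,3)
proof (induction k arbitrary: i)
  case 0 then show ?case by simp
next
  case (Suc k)
  from Suc.prems(1) obtain y where y: "(j,y) \<in> (arcrel E)^^k" "(y,i) \<in> arcrel E"
    by (rule relpow_Suc_E)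
  have "(j,y) \<in> (arcrel E)\<^sup>*" using y(1) by (rule relpow_imp_rtrancl)
  then have "y \<in> C" using closed_fwd[OF assms(1)] Suc.prems(2) by metis
  moreover have "i \<in> C" using assms(1) y(2) \<open>y\<in>C\<close> by (auto simp: closedset_def)
  ultimately have "(y,i) \<in> arcrel (induced E C)" using y(2) by (simp add: arcrel_induced)
  then show ?case using Suc.IH[OF y(1) Suc.prems(2)] by auto
qed

lemma gdist_closed:
  assumes "closedset V E C" "j \<in> C"
  shows "gdist (induced E C) j i = gdist E j i"
proof -
  have "(j,i) \<in> (arcrel (induced E C))^^k \<longleftrightarrow> (j,i) \<in> (arcrel E)^^k" for k
  proof
    assume "(j,i) \<in> (arcrel (induced E C))^^k"
    moreover have "arcrel (induced E C) \<subseteq> arcrel E" by (simp add: arcrel_induced)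
    ultimately show "(j,i) \<in> (arcrel E)^^k" using relpow_mono_set by (metis subsetD)
  qed (rule relpow_closed[OF assms(1) _ assms(2)])
  then show ?thesis by (simp add: gdist_def)
qed

lemma gdist_inf: "(\<not> (j,i) \<in> (arcrel E)\<^sup>*) \<Longrightarrow> gdist E j i = \<infinity>"
  by (auto simp: gdist_def dest: relpow_imp_rtrancl)

lemma gdist_fin: "(j,i) \<in> (arcrel E)^^k \<Longrightarrow> gdist E j i \<le> enat k"
  by (auto simp: gdist_def intro: Least_le)

lemma gdist_fin_obtain:
  assumes "gdist E j i = enat d" shows "(j,i) \<in> (arcrel E)^^d"
proof (cases "\<exists>k. (j, i) \<in> arcrel E ^^ k")
  case True
  then have "d = (LEAST k. (j, i) \<in> arcrel E ^^ k)" using assms by (simp add: gdist_def)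
  then show ?thesis using True by (metis LeastI)
next
  case False then show ?thesis using assms by (simp add: gdist_def)
qed

definition rval :: "nat set \<Rightarrow> (nat \<times> nat \<times> sign) set \<Rightarrow> nat \<Rightarrow> enat" where
  "rval V E i = Min ((\<lambda>U. gdist_set E U i + enat (card U)) ` {U. initial_comp V E U})"

lemma lam_rval: "lam V E = Max (rval V E ` V)"
  by (simp add: lam_def rval_def)

lemma initial_sub: "initial_comp V E U \<Longrightarrow> U \<subseteq> V \<and> U \<noteq> {}"
  by (auto simp: initial_comp_def strong_comp_def)

lemma finite_initials: "finite V \<Longrightarrow> finite {U. initial_comp V E U}"
proof -
  assume "finite V"
  then have "finite (Pow V)" by simp
  moreover have "{U. initial_comp V E U} \<subseteq> Pow V" using initial_sub by blast
  ultimately show ?thesis by (rule finite_subset[rotated])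
qed

lemma gdist_set_inf:
  assumes "closedset V E C" "i \<in> C" "U \<inter> C = {}" "finite U" "U \<noteq> {}"
  shows "gdist_set E U i = \<infinity>"
proof -
  have "gdist E j i = \<infinity>" if "j \<in> U" for j
  proof -
    have "\<not> (j,i) \<in> (arcrel E)\<^sup>*"
    proof
      assume "(j,i) \<in> (arcrel E)\<^sup>*"
      then have "j \<in> C" using closed_bwd[OF assms(1) _ assms(2)] by metis
      then show False using that assms(3) by blast
    qed
    then show ?thesis by (rule gdist_inf)
  qed
  then show ?thesis unfolding gdist_set_def using assms(4,5)
    by (metis (mono_tags, lifting) Min_in finite_imageI image_iff image_is_empty)
qed

lemma initial_in_closed_or_disjoint:
  assumes "closedset V E C" "initial_comp V E U"
  shows "U \<subseteq> C \<or> U \<inter> C = {}"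
proof (cases "U \<inter> C = {}")
  case False
  then obtain u where "u \<in> U" "u \<in> C" by blast
  moreover have "strongly_conn E U" using assms(2) by (simp add: initial_comp_def strong_comp_def)
  ultimately show ?thesis using sc_closed[OF assms(1)] by metis
qed simp

lemma rval_closed:
  assumes fin: "finite V" and Esub: "E \<subseteq> V \<times> V \<times> UNIV" and cl: "closedset V E C" and iC: "i \<in> C"
  shows "rval C (induced E C) i = rval V E i"
proof -
  let ?h = "\<lambda>U. gdist_set E U i + enat (card U)"
  have CV: "C \<subseteq> V" using cl by (simp add: closedset_def)
  have eqset: "{U. initial_comp C (induced E C) U} = {U. initial_comp V E U \<and> U \<subseteq> C}"
    using initial_closed_iff[OF cl] by blast
  have gs: "gdist_set (induced E C) U i = gdist_set E U i" if "U \<subseteq> C" for U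
    unfolding gdist_set_def using gdist_closed[OF cl] that by (intro arg_cong[where f=Min] image_cong) auto
  have lhs: "rval C (induced E C) i = Min (?h ` {U. initial_comp V E U \<and> U \<subseteq> C})"
    unfolding rval_def eqset using gs by (intro arg_cong[where f=Min] image_cong) auto
  obtain U0 u where U0: "initial_comp V E U0" "u \<in> U0" "(u,i) \<in> (arcrel E)\<^sup>*"
    using exists_initial[OF fin Esub] iC CV by blast
  have "u \<in> C" using closed_bwd[OF cl U0(3) iC] .
  then have U0C: "U0 \<subseteq> C" using initial_in_closed_or_disjoint[OF cl U0(1)] U0(2) by blast
  have finI: "finite {U. initial_comp V E U}" using finite_initials[OF fin] .
  have A: "finite (?h ` {U. initial_comp V E U \<and> U \<subseteq> C})"
    using finI by (auto intro: finite_subset)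
  have ne: "?h ` {U. initial_comp V E U \<and> U \<subseteq> C} \<noteq> {}" using U0 U0C by blast
  have h1: "Min (?h ` {U. initial_comp V E U}) \<le> Min (?h ` {U. initial_comp V E U \<and> U \<subseteq> C})"
      using A ne finI by (intro Min_antimono) auto
  have h2: "Min (?h ` {U. initial_comp V E U \<and> U \<subseteq> C}) \<le> Min (?h ` {U. initial_comp V E U})"
    proof -
      have "Min (?h ` {U. initial_comp V E U}) \<in> ?h ` {U. initial_comp V E U}"
        using finI U0(1) by (intro Min_in) auto
      then obtain U1 where U1: "initial_comp V E U1" "?h U1 = Min (?h ` {U. initial_comp V E U})"
        by auto
      show ?thesis
      proof (cases "U1 \<subseteq> C")
        case True
        then have "?h U1 \<in> ?h ` {U. initial_comp V E U \<and> U \<subseteq> C}" using U1 by blast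
        then show ?thesis using U1 A by (metis Min_le)
      next
        case False
        then have "U1 \<inter> C = {}" using initial_in_closed_or_disjoint[OF cl U1(1)] by blast
        moreover have "finite U1" "U1 \<noteq> {}" using initial_sub[OF U1(1)] fin by (auto intro: finite_subset)
        ultimately have "?h U1 = \<infinity>" using gdist_set_inf[OF cl iC] by simp
        then show ?thesis using U1 by (metis enat_ord_simps(3))
      qed
    qed
  have rhs: "rval V E i = Min (?h ` {U. initial_comp V E U})" by (simp add: rval_def)
  show ?thesis unfolding lhs rhs using h1 h2 by (rule antisym[rotated])
qed

lemma comp_closed:
  assumes Esub: "E \<subseteq> V \<times> V \<times> UNIV"
  shows "closedset V E {u \<in> V. (v, u) \<in> (arcrel E \<union> (arcrel E)\<inverse>)\<^sup>*}"
  unfolding closedset_def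
proof (intro conjI allI impI)
  let ?S = "arcrel E \<union> (arcrel E)\<inverse>"
  fix j i assume ji: "(j,i) \<in> arcrel E"
  then have V: "j \<in> V" "i \<in> V" using arcrel_sub[OF Esub] by auto
  have "(j,i) \<in> ?S" "(i,j) \<in> ?S" using ji by auto
  have "(v,j) \<in> ?S\<^sup>* \<longleftrightarrow> (v,i) \<in> ?S\<^sup>*"
  proof
    assume "(v,j) \<in> ?S\<^sup>*" then show "(v,i) \<in> ?S\<^sup>*" using \<open>(j,i) \<in> ?S\<close> by (rule rtrancl_into_rtrancl)
  next
    assume "(v,i) \<in> ?S\<^sup>*" then show "(v,j) \<in> ?S\<^sup>*" using \<open>(i,j) \<in> ?S\<close> by (rule rtrancl_into_rtrancl)
  qed
  then show "(j \<in> {u \<in> V. (v, u) \<in> ?S\<^sup>*}) = (i \<in> {u \<in> V. (v, u) \<in> ?S\<^sup>*})"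
    using V by simp
next
  show "{u \<in> V. (v, u) \<in> (arcrel E \<union> (arcrel E)\<inverse>)\<^sup>*} \<subseteq> V" by blast
qed

lemma ucomps_closed: "E \<subseteq> V \<times> V \<times> UNIV \<Longrightarrow> C \<in> ucomps V E \<Longrightarrow> closedset V E C"
  unfolding ucomps_def using comp_closed by blast

lemma ucomps_ne: "C \<in> ucomps V E \<Longrightarrow> C \<noteq> {}"
  unfolding ucomps_def by auto

lemma ucomps_cover: "\<Union> (ucomps V E) = V"
  unfolding ucomps_def by auto

lemma ucomps_sub: "C \<in> ucomps V E \<Longrightarrow> C \<subseteq> V"
  unfolding ucomps_def by auto

lemma ucomps_of: "v \<in> V \<Longrightarrow> \<exists>C\<in>ucomps V E. v \<in> C"
  unfolding ucomps_def by auto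

lemma Max_Union_image:
  fixes f :: "'a \<Rightarrow> 'b::linorder"
  assumes "finite CC" "CC \<noteq> {}" "\<And>C. C \<in> CC \<Longrightarrow> finite C \<and> C \<noteq> {}"
  shows "Max (f ` \<Union> CC) = Max ((\<lambda>C. Max (f ` C)) ` CC)"
proof (rule antisym)
  have fin: "finite (\<Union> CC)" using assms by auto
  obtain C0 where "C0 \<in> CC" using assms by auto
  then have ne: "\<Union> CC \<noteq> {}" using assms(3) by blast
  show "Max (f ` \<Union> CC) \<le> Max ((\<lambda>C. Max (f ` C)) ` CC)"
  proof (subst Max_le_iff)
    show "finite (f ` \<Union> CC)" using fin by simp
    show "f ` \<Union> CC \<noteq> {}" using ne by simp
    show "\<forall>a\<in>f ` \<Union> CC. a \<le> Max ((\<lambda>C. Max (f ` C)) ` CC)"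
    proof
      fix a assume "a \<in> f ` \<Union> CC"
      then obtain C x where "C \<in> CC" "x \<in> C" "a = f x" by auto
      then have "a \<le> Max (f ` C)" using assms(3) by (simp add: Max_ge)
      also have "\<dots> \<le> Max ((\<lambda>C. Max (f ` C)) ` CC)" using \<open>C\<in>CC\<close> assms(1) by (simp add: Max_ge)
      finally show "a \<le> Max ((\<lambda>C. Max (f ` C)) ` CC)" .
    qed
  qed
  show "Max ((\<lambda>C. Max (f ` C)) ` CC) \<le> Max (f ` \<Union> CC)"
  proof (subst Max_le_iff)
    show "finite ((\<lambda>C. Max (f ` C)) ` CC)" using assms by simp
    show "(\<lambda>C. Max (f ` C)) ` CC \<noteq> {}" using assms by simp
    show "\<forall>a\<in>(\<lambda>C. Max (f ` C)) ` CC. a \<le> Max (f ` \<Union> CC)"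
    proof
      fix a assume "a \<in> (\<lambda>C. Max (f ` C)) ` CC"
      then obtain C where C: "C \<in> CC" "a = Max (f ` C)" by auto
      then have "Max (f ` C) \<in> f ` C" using assms(3) by (intro Max_in) auto
      then obtain x where "x \<in> C" "a = f x" using C by auto
      then show "a \<le> Max (f ` \<Union> CC)" using fin C by (intro Max_ge) auto
    qed
  qed
qed

lemma lam_components:
  assumes fin: "finite V" and Esub: "E \<subseteq> V \<times> V \<times> UNIV" and ne: "V \<noteq> {}"
  shows "lam V E = Max ((\<lambda>C. lam C (induced E C)) ` ucomps V E)"
proof -
  have finC: "finite (ucomps V E)" using fin by (simp add: ucomps_def)
  have neC: "ucomps V E \<noteq> {}" using ne by (simp add: ucomps_def)
  have each: "C \<in> ucomps V E \<Longrightarrow> finite C \<and> C \<noteq> {}" for C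
    using ucomps_ne[of C V E] ucomps_sub[of C V E] fin finite_subset by blast
  have "lam V E = Max (rval V E ` \<Union> (ucomps V E))" by (simp add: lam_rval ucomps_cover)
  also have "\<dots> = Max ((\<lambda>C. Max (rval V E ` C)) ` ucomps V E)"
    using finC neC each by (rule Max_Union_image)
  also have "\<dots> = Max ((\<lambda>C. lam C (induced E C)) ` ucomps V E)"
  proof (intro arg_cong[where f=Max] image_cong refl)
    fix C assume C: "C \<in> ucomps V E"
    have "rval V E ` C = rval C (induced E C) ` C"
      using rval_closed[OF fin Esub ucomps_closed[OF Esub C]] by simp
    then show "Max (rval V E ` C) = lam C (induced E C)" by (simp add: lam_rval)
  qed
  finally show ?thesis .
qed

lemma basic_components:
  assumes Esub: "E \<subseteq> V \<times> V \<times> UNIV"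
  shows "basic V E \<longleftrightarrow> (\<forall>C\<in>ucomps V E. basic C (induced E C))"
proof
  assume b: "basic V E"
  show "\<forall>C\<in>ucomps V E. basic C (induced E C)"
  proof (intro ballI)
    fix C assume C: "C \<in> ucomps V E"
    note cl = ucomps_closed[OF Esub C]
    show "basic C (induced E C)" unfolding basic_def
    proof (intro allI impI)
      fix U assume "initial_comp C (induced E C) U"
      then have "initial_comp V E U" "U \<subseteq> C" using initial_closed_iff[OF cl] by auto
      then show "trivial_comp (induced E C) U" using b
        by (simp add: basic_def trivial_comp_def induced_induced)
    qed
  qed
next
  assume a: "\<forall>C\<in>ucomps V E. basic C (induced E C)"
  show "basic V E" unfolding basic_def
  proof (intro allI impI)
    fix U assume U: "initial_comp V E U"
    then obtain u where u: "u \<in> U" "u \<in> V" using initial_sub by blast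
    then obtain C where C: "C \<in> ucomps V E" "u \<in> C" using ucomps_of by blast
    note cl = ucomps_closed[OF Esub C(1)]
    have "U \<subseteq> C" using initial_in_closed_or_disjoint[OF cl U] u C by blast
    then have "initial_comp C (induced E C) U" using initial_closed_iff[OF cl] U by simp
    then have "trivial_comp (induced E C) U" using a C basic_def by blast
    then show "trivial_comp E U" using \<open>U \<subseteq> C\<close> by (simp add: trivial_comp_def induced_induced)
  qed
qed

lemma beta_components:
  assumes fin: "finite V" and Esub: "E \<subseteq> V \<times> V \<times> UNIV" and ne: "V \<noteq> {}"
  shows "beta V E = Max ((\<lambda>C. beta C (induced E C)) ` ucomps V E)"
proof -
  have finC: "finite (ucomps V E)" using fin by (simp add: ucomps_def)
  have neC: "ucomps V E \<noteq> {}" using ne by (simp add: ucomps_def)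
  show ?thesis
  proof (cases "basic V E")
    case True
    then have "(\<lambda>C. beta C (induced E C)) ` ucomps V E = {0}"
      using basic_components[OF Esub] neC by (auto simp: beta_def)
    then show ?thesis using True by (simp add: beta_def)
  next
    case False
    then obtain C where C: "C \<in> ucomps V E" "\<not> basic C (induced E C)"
      using basic_components[OF Esub] by blast
    have le: "\<forall>x\<in>(\<lambda>C. beta C (induced E C)) ` ucomps V E. x \<le> 1" by (auto simp: beta_def)
    have "1 \<in> (\<lambda>C. beta C (induced E C)) ` ucomps V E" using C by (force simp: beta_def)
    then have "Max ((\<lambda>C. beta C (induced E C)) ` ucomps V E) = 1"
      using le finC by (intro Max_eqI) auto
    then show ?thesis using False by (simp add: beta_def)
  qed
qed

lemma path_shorten:
  assumes g: "g 0 = a" "g k = b" "\<forall>i<k. (g i, g (Suc i)) \<in> R" and pq: "p < q" "q \<le> k" "g p = g q"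
  shows "(a,b) \<in> R^^(k - (q - p))"
proof -
  define k' where "k' = k - (q - p)"
  define g' where "g' i = (if i \<le> p then g i else g (i + (q - p)))" for i
  have "g' 0 = a" using g by (simp add: g'_def)
  moreover have "g' k' = b"
  proof (cases "k' \<le> p")
    case True
    then have "k' = p" "q = k" using pq by (auto simp: k'_def)
    then show ?thesis using True g pq by (simp add: g'_def)
  next
    case False
    then have "k' + (q - p) = k" using pq by (simp add: k'_def)
    then show ?thesis using False g by (simp add: g'_def)
  qed
  moreover have "\<forall>i<k'. (g' i, g' (Suc i)) \<in> R"
  proof (intro allI impI)
    fix i assume i: "i < k'"
    show "(g' i, g' (Suc i)) \<in> R"
    proof (cases "Suc i \<le> p")
      case True then show ?thesis using g i pq by (simp add: g'_def k'_def)
    next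
      case False
      show ?thesis
      proof (cases "i = p")
        case True
        then have "q < k" using i pq by (simp add: k'_def)
        then have "(g q, g (Suc q)) \<in> R" using g by simp
        moreover have "Suc p + (q - p) = Suc q" using pq by simp
        ultimately show ?thesis using True pq by (simp add: g'_def)
      next
        case False
        then have "p < i" using \<open>\<not> Suc i \<le> p\<close> by simp
        then have "i + (q - p) < k" using i pq by (simp add: k'_def)
        then have "(g (i + (q - p)), g (Suc (i + (q - p)))) \<in> R" using g by simp
        then show ?thesis using \<open>p < i\<close> by (simp add: g'_def)
      qed
    qed
  qed
  ultimately show ?thesis unfolding k'_def[symmetric] relpow_fun_conv by blast
qed

lemma relpow_short:
  assumes fin: "finite U" and RU: "R \<subseteq> U \<times> U" and aU: "a \<in> U"
  shows "(a,b) \<in> R^^k \<Longrightarrow> \<exists>k'<card U. (a,b) \<in> R^^k'"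
proof (induction k rule: less_induct)
  case (less k)
  show ?case
  proof (cases "k < card U")
    case True then show ?thesis using less.prems by blast
  next
    case False
    from less.prems obtain g where g: "g 0 = a" "g k = b" "\<forall>i<k. (g i, g (Suc i)) \<in> R"
      unfolding relpow_fun_conv by blast
    have img: "g ` {0..k} \<subseteq> U"
    proof
      fix y assume "y \<in> g ` {0..k}"
      then obtain i where i: "i \<le> k" "y = g i" by auto
      show "y \<in> U"
      proof (cases i)
        case 0 then show ?thesis using i g aU by simp
      next
        case (Suc j)
        then have "(g j, g i) \<in> R" using g i by simp
        then show ?thesis using RU i by auto
      qed
    qed
    have "\<not> inj_on g {0..k}"
    proof
      assume "inj_on g {0..k}"
      then have "card (g ` {0..k}) = Suc k" by (simp add: card_image)
      moreover have "card (g ` {0..k}) \<le> card U" using img fin by (rule card_mono[rotated])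
      ultimately show False using False by simp
    qed
    then obtain p q where pq0: "p \<in> {0..k}" "q \<in> {0..k}" "p \<noteq> q" "g p = g q"
      unfolding inj_on_def by blast
    then obtain p' q' where pq: "p' < q'" "q' \<le> k" "g p' = g q'"
      by (metis atLeastAtMost_iff linorder_neqE_nat)
    have "(a,b) \<in> R^^(k - (q' - p'))" using path_shorten[OF g pq] .
    moreover have "k - (q' - p') < k" using pq by simp
    ultimately show ?thesis using less.IH by blast
  qed
qed

lemma finite_sign: "finite (UNIV :: sign set)"
proof -
  have e: "(UNIV :: sign set) = {Pos, Neg}" by (auto intro: sign.exhaust)
  show ?thesis by (subst e) simp
qed

locale GG =
  fixes n :: nat and E :: "(nat \<times> nat \<times> sign) set"
  assumes n1: "n \<ge> 1"
    and Esub: "E \<subseteq> {1..n} \<times> {1..n} \<times> UNIV"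
    and nocyc: "\<forall>C\<in>ucomps {1..n} E. \<not> signed_cycle C (induced E C)"
begin

abbreviation "V \<equiv> {1..n::nat}"
abbreviation "R \<equiv> arcrel E"

lemma RV: "R \<subseteq> V \<times> V" using Esub by (rule arcrel_sub)

lemma finE: "finite E"
proof -
  have "finite (V \<times> V \<times> (UNIV :: sign set))" using finite_sign by simp
  then show ?thesis using Esub by (rule finite_subset[rotated])
qed

lemma fin_out: "finite {(i, s). (j, i, s) \<in> E}"
proof -
  have "{(i, s). (j, i, s) \<in> E} \<subseteq> (\<lambda>(a,b,c). (b,c)) ` E" by force
  then show ?thesis using finE by (meson finite_imageI finite_subset)
qed

lemma fin_in: "finite {(j, s). (j, i, s) \<in> E}"
proof -
  have "{(j, s). (j, i, s) \<in> E} \<subseteq> (\<lambda>(a,b,c). (a,c)) ` E" by force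
  then show ?thesis using finE by (meson finite_imageI finite_subset)
qed

definition NT :: "nat set \<Rightarrow> bool" where
  "NT U \<longleftrightarrow> initial_comp V E U \<and> \<not> trivial_comp E U"

lemma NT_out:
  assumes "NT U" "v \<in> U"
  shows "\<exists>y\<in>U. (v,y) \<in> R"
proof -
  have init: "initial_comp V E U" and nt: "\<not> trivial_comp E U" using assms by (auto simp: NT_def)
  have UV: "U \<subseteq> V" "U \<noteq> {}" using initial_sub[OF init] by auto
  have finU: "finite U" using UV finite_subset by blast
  have sc: "strongly_conn E U" using init by (simp add: initial_comp_def strong_comp_def)
  show ?thesis
  proof (cases "card U = 1")
    case True
    then obtain a where "U = {a}" by (metis card_1_singletonE)
    then have "induced E U \<noteq> {}" using nt True by (simp add: trivial_comp_def)
    then obtain j i s where "(j,i,s) \<in> E" "j \<in> U" "i \<in> U" by (auto simp: induced_def)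
    then show ?thesis using \<open>U = {a}\<close> assms(2) by (auto simp: arcrel_def)
  next
    case False
    have "card U \<noteq> 0" using UV finU by simp
    then have "\<not> card U \<le> Suc 0" using False by simp
    then obtain u where u: "u \<in> U" "u \<noteq> v"
      using card_le_Suc0_iff_eq[OF finU] assms(2) by blast
    have "(v,u) \<in> (arcrel (induced E U))\<^sup>*" using sc assms(2) u(1) by (simp add: strongly_conn_def)
    then have "(v,u) \<in> (arcrel (induced E U))\<^sup>+" using u(2) by (simp add: rtrancl_eq_or_trancl)
    then obtain y where "(v,y) \<in> arcrel (induced E U)" by (meson converse_tranclE)
    then show ?thesis by (auto simp: arcrel_induced)
  qed
qed

lemma NT_big_out:
  assumes "NT U"
  shows "\<exists>v\<in>U. \<exists>w\<in>U. (v,w) \<in> R \<and> 2 \<le> out_deg E v"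
proof (rule ccontr)
  assume H: "\<not> ?thesis"
  have init: "initial_comp V E U" using assms by (auto simp: NT_def)
  have UV: "U \<subseteq> V" "U \<noteq> {}" using initial_sub[OF init] by auto
  have finU: "finite U" using UV finite_subset by blast
  have sc: "strongly_conn E U" using init by (simp add: initial_comp_def strong_comp_def)
  have le1: "out_deg E v \<le> 1" if vU: "v \<in> U" for v
  proof (rule ccontr)
    assume "\<not> out_deg E v \<le> 1"
    then have "2 \<le> out_deg E v" by simp
    moreover obtain y where "y \<in> U" "(v,y) \<in> R" using NT_out[OF assms vU] by blast
    ultimately show False using H vU by blast
  qed
  have uniq: "z = z' \<and> s = s'" if "v \<in> U" "(v,z,s) \<in> E" "(v,z',s') \<in> E" for v z s z' s'
  proof -
    have "card {(i, s). (v, i, s) \<in> E} \<le> Suc 0" using le1[OF that(1)] by (simp add: out_deg_def)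
    then have "\<forall>a\<in>{(i, s). (v, i, s) \<in> E}. \<forall>b\<in>{(i, s). (v, i, s) \<in> E}. a = b"
      using card_le_Suc0_iff_eq[OF fin_out] by blast
    then show ?thesis using that by blast
  qed
  define succ where "succ v = (SOME y. y \<in> U \<and> (v,y) \<in> R)" for v
  have succ: "succ v \<in> U \<and> (v, succ v) \<in> R" if "v \<in> U" for v
    unfolding succ_def using NT_out[OF assms that] by (metis (mono_tags, lifting) someI_ex)
  have arc_succ: "z = succ v" if vz: "v \<in> U" "(v,z,s) \<in> E" for v z s
  proof -
    obtain s' where "(v, succ v, s') \<in> E" using succ[OF vz(1)] by (auto simp: arcrel_def)
    then show ?thesis using uniq vz by blast
  qed
  obtain u0 where u0: "u0 \<in> U" using UV by blast
  define S where "S = R \<union> R\<inverse>"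
  define C where "C = {u \<in> V. (u0, u) \<in> S\<^sup>*}"
  have CU: "C = U"
  proof
    show "U \<subseteq> C"
    proof
      fix u assume "u \<in> U"
      then have "(u0,u) \<in> R\<^sup>*" using sc u0 strongly_conn_rtrancl by blast
      moreover have "R\<^sup>* \<subseteq> S\<^sup>*" unfolding S_def by (rule rtrancl_mono) blast
      ultimately show "u \<in> C" using \<open>u\<in>U\<close> UV by (auto simp: C_def)
    qed
    show "C \<subseteq> U"
    proof
      fix u assume "u \<in> C"
      then have "(u0,u) \<in> S\<^sup>*" by (simp add: C_def)
      then show "u \<in> U"
      proof (induction rule: rtrancl_induct)
        case base then show ?case using u0 .
      next
        case (step a b)
        show ?case
        proof (cases "(a,b) \<in> R")
          case True
          then obtain s where "(a,b,s) \<in> E" by (auto simp: arcrel_def)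
          then show ?thesis using arc_succ succ step.IH by blast
        next
          case False
          then have "(b,a) \<in> R" using step.hyps(2) by (auto simp: S_def)
          then obtain s where s: "(b,a,s) \<in> E" by (auto simp: arcrel_def)
          then have "b \<in> V" using Esub by auto
          then show ?thesis using init s step.IH unfolding initial_comp_def by blast
        qed
      qed
    qed
  qed
  have Ucomp: "U \<in> ucomps V E"
    unfolding ucomps_def using u0 UV CU unfolding C_def S_def by blast
  define g where "g k = (succ ^^ k) u0" for k
  have gU: "g k \<in> U" for k
    by (induction k) (auto simp: g_def u0 succ)
  have gSuc: "g (Suc k) = succ (g k)" for k by (simp add: g_def)
  have reach: "\<exists>k. u = (succ ^^ k) a" if au: "a \<in> U" "(a,u) \<in> R\<^sup>*" for a u
    using au(2)
  proof (induction rule: rtrancl_induct)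
    case base then show ?case by (metis funpow_0)
  next
    case (step b c)
    then obtain k where k: "b = (succ ^^ k) a" by blast
    have "(a,b) \<in> R\<^sup>*" using step.hyps(1) .
    have bU: "b \<in> U"
    proof -
      have "(succ ^^ k) a \<in> U" using au(1) by (induction k) (auto simp: succ)
      then show ?thesis using k by simp
    qed
    obtain s where "(b,c,s) \<in> E" using step.hyps(2) by (auto simp: arcrel_def)
    then have "c = succ b" using arc_succ bU by blast
    then show ?case using k by (metis comp_apply funpow.simps(2))
  qed
  have "(succ u0, u0) \<in> R\<^sup>*" using sc succ[OF u0] u0 strongly_conn_rtrancl by blast
  then obtain k0 where "u0 = (succ ^^ k0) (succ u0)" using reach succ[OF u0] by blast
  then have per0: "g (Suc k0) = u0" unfolding g_def funpow_Suc_right by simp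
  define P where "P = (LEAST p. 0 < p \<and> g p = u0)"
  have "0 < P \<and> g P = u0" unfolding P_def
    by (rule LeastI[of "\<lambda>p. 0 < p \<and> g p = u0" "Suc k0"]) (simp add: per0)
  then have P: "0 < P" "g P = u0" by auto
  have Pmin: "\<not> (0 < p \<and> g p = u0)" if "p < P" for p using not_less_Least[of p] that unfolding P_def by blast
  have gadd: "g (a + b) = (succ ^^ a) (g b)" for a b by (simp add: g_def funpow_add)
  have gper: "g (k + P * m) = g k" for k m
  proof (induction m)
    case 0 then show ?case by simp
  next
    case (Suc m)
    have "g (k + P * Suc m) = g ((k + P * m) + P)" by (simp add: algebra_simps)
    also have "\<dots> = (succ ^^ (k + P * m)) (g P)" by (simp add: g_def funpow_add)
    also have "\<dots> = g (k + P * m)" using P(2) by (simp add: g_def)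
    finally show ?case using Suc by simp
  qed
  have gmod: "g k = g (k mod P)" for k
    using gper[of "k mod P" "k div P"] by simp
  have ginj: "inj_on g {0..<P}"
  proof (rule inj_onI)
    fix a b assume a: "a \<in> {0..<P}" and b: "b \<in> {0..<P}" and eq: "g a = g b"
    show "a = b"
    proof (rule ccontr)
      assume "a \<noteq> b"
      then have "\<exists>a b. a < b \<and> b < P \<and> g a = g b" using a b eq by (metis atLeastLessThan_iff linorder_neqE_nat)
      then obtain a b where ab: "a < b" "b < P" "g a = g b" by blast
      have "g ((P - b) + a) = (succ ^^ (P - b)) (g a)" by (rule gadd)
      also have "\<dots> = (succ ^^ (P - b)) (g b)" using ab by simp
      also have "\<dots> = g ((P - b) + b)" by (rule gadd[symmetric])
      also have "\<dots> = u0" using ab P by simp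
      finally have "g ((P - b) + a) = u0" .
      moreover have "(P - b) + a < P" "0 < (P - b) + a" using ab by auto
      ultimately show False using Pmin by blast
    qed
  qed
  define vs where "vs = map g [0..<P]"
  have vslen: "length vs = P" by (simp add: vs_def)
  have vsnth: "vs ! k = g k" if "k < P" for k using that by (simp add: vs_def)
  have vsset: "set vs = U"
  proof
    show "set vs \<subseteq> U" using gU by (auto simp: vs_def)
    show "U \<subseteq> set vs"
    proof
      fix u assume "u \<in> U"
      then have "(u0,u) \<in> R\<^sup>*" using sc u0 strongly_conn_rtrancl by blast
      then obtain k where "u = g k" using reach u0 unfolding g_def by blast
      then have "u = g (k mod P)" using gmod by simp
      moreover have "k mod P < P" using P(1) by simp
      ultimately show "u \<in> set vs" unfolding vs_def by auto
    qed
  qed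
  have vsd: "distinct vs" unfolding vs_def using ginj by (simp add: distinct_map)
  have arcs: "arcrel (induced E U) = {(vs ! k, vs ! ((k + 1) mod length vs)) | k. k < length vs}"
  proof
    show "arcrel (induced E U) \<subseteq> {(vs ! k, vs ! ((k + 1) mod length vs)) | k. k < length vs}"
    proof
      fix p assume "p \<in> arcrel (induced E U)"
      then obtain v z s where p: "p = (v,z)" "(v,z,s) \<in> E" "v \<in> U" by (auto simp: arcrel_def induced_def)
      then have "z = succ v" using arc_succ by blast
      obtain k where k: "k < P" "v = vs ! k" using p(3) vsset by (metis in_set_conv_nth vslen)
      have "vs ! ((k + 1) mod P) = g ((k+1) mod P)" using P(1) by (simp add: vsnth)
      also have "\<dots> = g (Suc k)" using gmod by simp
      also have "\<dots> = succ v" using k by (simp add: gSuc vsnth)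
      finally show "p \<in> {(vs ! k, vs ! ((k + 1) mod length vs)) | k. k < length vs}"
        using p k \<open>z = succ v\<close> vslen by auto
    qed
    show "{(vs ! k, vs ! ((k + 1) mod length vs)) | k. k < length vs} \<subseteq> arcrel (induced E U)"
    proof
      fix p assume "p \<in> {(vs ! k, vs ! ((k + 1) mod length vs)) | k. k < length vs}"
      then obtain k where k: "k < P" "p = (vs ! k, vs ! ((k + 1) mod P))" using vslen by auto
      have "vs ! ((k + 1) mod P) = g (Suc k)" using P(1) gmod by (simp add: vsnth)
      then have "p = (g k, succ (g k))" using k by (simp add: vsnth gSuc)
      then show "p \<in> arcrel (induced E U)" using succ[OF gU[of k]] gU[of k] by (auto simp: arcrel_induced)
    qed
  qed
  have nopar: "\<forall>j i. \<not> ((j, i, Pos) \<in> induced E U \<and> (j, i, Neg) \<in> induced E U)"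
  proof (intro allI notI)
    fix j i assume "(j, i, Pos) \<in> induced E U \<and> (j, i, Neg) \<in> induced E U"
    then have "j \<in> U" "(j,i,Pos) \<in> E" "(j,i,Neg) \<in> E" by (auto simp: induced_def)
    then show False using uniq[of j i Pos i Neg] by simp
  qed
  have "vs \<noteq> []" using P(1) vslen by auto
  then have "signed_cycle U (induced E U)"
    unfolding signed_cycle_def using vsd vsset arcs nopar by blast
  then show False using nocyc Ucomp by blast
qed

end

context GG
begin

definition Gin :: "nat \<Rightarrow> nat set" where "Gin i = {j. (j,i) \<in> R}"
definition dbl :: "nat \<Rightarrow> nat \<Rightarrow> bool" where "dbl j i \<longleftrightarrow> (j,i,Pos) \<in> E \<and> (j,i,Neg) \<in> E"

definition dpair :: "nat set \<Rightarrow> nat \<times> nat" where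
  "dpair U = (SOME p. fst p \<in> U \<and> snd p \<in> U \<and> (fst p, snd p) \<in> R \<and> 2 \<le> out_deg E (fst p))"
definition dv :: "nat set \<Rightarrow> nat" where "dv U = fst (dpair U)"
definition dw :: "nat set \<Rightarrow> nat" where "dw U = snd (dpair U)"

lemma dpair:
  assumes "NT U"
  shows "dv U \<in> U \<and> dw U \<in> U \<and> (dv U, dw U) \<in> R \<and> 2 \<le> out_deg E (dv U)"
proof -
  obtain v w where "v \<in> U" "w \<in> U" "(v,w) \<in> R" "2 \<le> out_deg E v" using NT_big_out[OF assms] by blast
  then have "\<exists>p. fst p \<in> U \<and> snd p \<in> U \<and> (fst p, snd p) \<in> R \<and> 2 \<le> out_deg E (fst p)"
    by (intro exI[of _ "(v,w)"]) simp
  then show ?thesis unfolding dv_def dw_def dpair_def by (rule someI_ex)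
qed

definition inNT :: "nat \<Rightarrow> bool" where "inNT i \<longleftrightarrow> (\<exists>U. NT U \<and> i \<in> U)"
definition UU :: "nat \<Rightarrow> nat set" where "UU i = (SOME U. NT U \<and> i \<in> U)"

lemma UU: "inNT i \<Longrightarrow> NT (UU i) \<and> i \<in> UU i"
  unfolding inNT_def UU_def by (rule someI_ex)

lemma NT_eq: "NT U \<Longrightarrow> NT U' \<Longrightarrow> i \<in> U \<Longrightarrow> i \<in> U' \<Longrightarrow> U = U'"
  unfolding NT_def initial_comp_def using strong_comp_eq by blast

lemma UU_eq: "NT U \<Longrightarrow> i \<in> U \<Longrightarrow> UU i = U"
  using UU NT_eq inNT_def by blast

lemma NT_sub: "NT U \<Longrightarrow> U \<subseteq> V \<and> U \<noteq> {} \<and> finite U \<and> card U \<le> n"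
proof -
  assume "NT U"
  then have "U \<subseteq> V" "U \<noteq> {}" using initial_sub NT_def by blast+
  moreover then have "finite U" using finite_subset by blast
  moreover have "card U \<le> n" using card_mono[OF _ \<open>U \<subseteq> V\<close>] by simp
  ultimately show ?thesis by blast
qed

definition isdv :: "nat \<Rightarrow> bool" where "isdv j \<longleftrightarrow> inNT j \<and> j = dv (UU j)"
definition isw :: "nat \<Rightarrow> bool" where "isw i \<longleftrightarrow> inNT i \<and> i = dw (UU i)"
definition modeA :: "nat \<Rightarrow> bool" where "modeA j \<longleftrightarrow> isdv j \<and> \<not> dbl j (dw (UU j))"

definition m :: "nat \<Rightarrow> int" where
  "m j = (if out_deg E j = 0 then (if 0 < in_deg E j then 1 else 0)
          else if (\<exists>i. dbl j i) \<or> isdv j then 2 else 1)"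
definition sig :: "nat \<Rightarrow> int" where "sig j = (if modeA j then 1 else m j)"
definition th :: "nat \<Rightarrow> int" where "th j = (if modeA j then 2 else 1)"
definition lit :: "nat \<Rightarrow> nat \<Rightarrow> int \<Rightarrow> bool" where
  "lit j i x \<longleftrightarrow> (if dbl j i then x = 1 else if (j,i,Pos) \<in> E then th j \<le> x else x < th j)"

lemma in_deg_pos: "Gin i \<noteq> {} \<Longrightarrow> 0 < in_deg E i"
proof -
  assume "Gin i \<noteq> {}"
  then obtain j s where "(j,i,s) \<in> E" by (auto simp: Gin_def arcrel_def)
  then have "{(j, s). (j, i, s) \<in> E} \<noteq> {}" by blast
  then show ?thesis unfolding in_deg_def using fin_in card_gt_0_iff by blast
qed

lemma out_deg_pos: "(j,i) \<in> R \<Longrightarrow> 0 < out_deg E j"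
proof -
  assume "(j,i) \<in> R"
  then obtain s where "(j,i,s) \<in> E" by (auto simp: arcrel_def)
  then have "{(i, s). (j, i, s) \<in> E} \<noteq> {}" by blast
  then show ?thesis unfolding out_deg_def using fin_out card_gt_0_iff by blast
qed

lemma dbl_out: "dbl j i \<Longrightarrow> 2 \<le> out_deg E j"
proof -
  assume "dbl j i"
  then have "{(i,Pos),(i,Neg)} \<subseteq> {(i, s). (j, i, s) \<in> E}" by (auto simp: dbl_def)
  then have "card {(i,Pos),(i,Neg)} \<le> out_deg E j" unfolding out_deg_def using fin_out by (rule card_mono[rotated])
  then show ?thesis by simp
qed

lemma isdv_out: "isdv j \<Longrightarrow> 2 \<le> out_deg E j"
  unfolding isdv_def using UU dpair by metis

lemma m_range: "0 \<le> m j \<and> m j \<le> 2" by (simp add: m_def)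

lemma m_le_out: "out_deg E j \<noteq> 0 \<Longrightarrow> m j \<le> int (out_deg E j)"
proof -
  assume a: "out_deg E j \<noteq> 0"
  show ?thesis
  proof (cases "(\<exists>i. dbl j i) \<or> isdv j")
    case True
    then have "2 \<le> out_deg E j" using dbl_out isdv_out by blast
    then show ?thesis using a True by (simp add: m_def)
  next
    case False
    then have "m j = 1" using a unfolding m_def by auto
    then show ?thesis using a by simp
  qed
qed

lemma modeA_m: "modeA j \<Longrightarrow> m j = 2"
proof -
  assume a: "modeA j"
  then have "isdv j" by (simp add: modeA_def)
  then have "out_deg E j \<noteq> 0" using isdv_out[of j] by simp
  then show ?thesis using \<open>isdv j\<close> by (simp add: m_def)
qed

lemma sig_range: "0 \<le> sig j \<and> sig j \<le> m j"
  using modeA_m m_range by (auto simp: sig_def)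

lemma sig_pos: "Gin i \<noteq> {} \<Longrightarrow> 1 \<le> sig i"
  using in_deg_pos[of i] by (auto simp: sig_def m_def)

lemma m_pos: "(j,i) \<in> R \<Longrightarrow> 1 \<le> m j"
  using out_deg_pos[of j i] by (auto simp: m_def)

lemma th_ok: "(j,i) \<in> R \<Longrightarrow> 1 \<le> th j \<and> th j \<le> m j"
  using m_pos[of j i] modeA_m[of j] by (auto simp: th_def)

lemma dbl_m: "dbl j i \<Longrightarrow> m j = 2"
proof -
  assume "dbl j i"
  then have "out_deg E j \<noteq> 0" "\<exists>i. dbl j i" using dbl_out[of j i] by auto
  then show ?thesis by (simp add: m_def)
qed

lemma lit_vals: "(j,i) \<in> R \<Longrightarrow> \<exists>a b. 0 \<le> a \<and> a \<le> m j \<and> 0 \<le> b \<and> b \<le> m j \<and> lit j i a \<and> \<not> lit j i b"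
proof -
  assume ji: "(j,i) \<in> R"
  show ?thesis
  proof (cases "dbl j i")
    case True then show ?thesis using dbl_m[OF True] by (intro exI[of _ 1] exI[of _ 0]) (simp add: lit_def)
  next
    case False
    show ?thesis
    proof (cases "(j,i,Pos) \<in> E")
      case True
      then show ?thesis using False th_ok[OF ji] by (intro exI[of _ "m j"] exI[of _ 0]) (simp add: lit_def)
    next
      case F2: False
      then show ?thesis using False th_ok[OF ji] by (intro exI[of _ 0] exI[of _ "m j"]) (simp add: lit_def)
    qed
  qed
qed

lemma killed:
  assumes "NT U" "b = 0 \<or> b = 1"
  shows "lit (dv U) (dw U) (sig (dv U) * b) = lit (dv U) (dw U) 0"
proof -
  let ?v = "dv U" let ?w = "dw U"
  have vU: "?v \<in> U" using dpair[OF assms(1)] by blast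
  have UUv: "UU ?v = U" using UU_eq[OF assms(1) vU] .
  have isdv: "isdv ?v" unfolding isdv_def inNT_def UUv using assms(1) vU by blast
  show ?thesis
  proof (cases "dbl ?v ?w")
    case True
    then have "\<not> modeA ?v" by (simp add: modeA_def UUv)
    then have "sig ?v = 2" using dbl_m[OF True] by (simp add: sig_def)
    then show ?thesis using True assms(2) by (auto simp: lit_def)
  next
    case False
    then have "modeA ?v" using isdv by (simp add: modeA_def UUv)
    then have "sig ?v = 1" "th ?v = 2" by (auto simp: sig_def th_def)
    then show ?thesis using False assms(2) by (auto simp: lit_def)
  qed
qed

end

context GG
begin

definition rv :: "nat \<Rightarrow> enat" where "rv i = rval V E i"

lemma finI: "finite {U. initial_comp V E U}" using finite_initials by simp

lemma init_fin: "initial_comp V E U \<Longrightarrow> finite U \<and> U \<noteq> {}"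
proof -
  assume a: "initial_comp V E U"
  then have "U \<subseteq> V" "U \<noteq> {}" using initial_sub by auto
  then show ?thesis using finite_subset[of U V] by simp
qed

lemma rv_le:
  assumes "initial_comp V E U" "j \<in> U" "(j,p) \<in> R^^d"
  shows "rv p \<le> enat (d + card U)"
proof -
  have "gdist E j p \<le> enat d" using assms(3) by (rule gdist_fin)
  moreover have "gdist_set E U p \<le> gdist E j p"
    unfolding gdist_set_def using init_fin[OF assms(1)] assms(2) by (intro Min_le) auto
  ultimately have "gdist_set E U p \<le> enat d" using order_trans by blast
  then have "gdist_set E U p + enat (card U) \<le> enat d + enat (card U)" by (rule add_right_mono)
  then have "gdist_set E U p + enat (card U) \<le> enat (d + card U)" by simp
  moreover have "rv p \<le> gdist_set E U p + enat (card U)"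
    unfolding rv_def rval_def using finI assms(1) by (intro Min_le) auto
  ultimately show ?thesis by (rule order_trans[rotated])
qed

lemma rv_min:
  assumes iV: "i \<in> V"
  shows "\<exists>U d j. initial_comp V E U \<and> j \<in> U \<and> (j,i) \<in> R^^d \<and> rv i = enat (d + card U)"
proof -
  let ?h = "\<lambda>U. gdist_set E U i + enat (card U)"
  obtain U0 u where U0: "initial_comp V E U0" "u \<in> U0" "(u,i) \<in> R\<^sup>*"
    using exists_initial[of V E i] iV Esub by auto
  obtain k where "(u,i) \<in> R^^k" using U0(3) rtrancl_power by blast
  then have "rv i \<le> enat (k + card U0)" using rv_le U0 by blast
  have "rv i \<in> ?h ` {U. initial_comp V E U}"
    unfolding rv_def rval_def using finI U0(1) by (intro Min_in) auto
  then obtain U1 where U1: "initial_comp V E U1" "rv i = ?h U1" by auto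
  have "?h U1 \<noteq> \<infinity>"
  proof
    assume "?h U1 = \<infinity>"
    then show False using \<open>rv i \<le> enat (k + card U0)\<close> U1(2) by simp
  qed
  then have "gdist_set E U1 i \<noteq> \<infinity>" by (metis plus_enat_simps(2))
  have "gdist_set E U1 i \<in> (\<lambda>j. gdist E j i) ` U1"
    unfolding gdist_set_def using init_fin[OF U1(1)] by (intro Min_in) auto
  then obtain j where j: "j \<in> U1" "gdist_set E U1 i = gdist E j i" by auto
  then obtain d where d: "gdist E j i = enat d" using \<open>gdist_set E U1 i \<noteq> \<infinity>\<close> by (cases "gdist E j i") auto
  then have "(j,i) \<in> R^^d" by (rule gdist_fin_obtain)
  moreover have "rv i = enat (d + card U1)" using U1(2) j d by simp
  ultimately show ?thesis using U1(1) j(1) by blast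
qed

lemma rv_fin: "i \<in> V \<Longrightarrow> rv i = enat (the_enat (rv i)) \<and> 1 \<le> the_enat (rv i)"
proof -
  assume "i \<in> V"
  then obtain U d j where U: "initial_comp V E U" "j \<in> U" "rv i = enat (d + card U)"
    using rv_min by blast
  have "card U \<ge> 1" using init_fin[OF U(1)] by (simp add: Suc_leI card_gt_0_iff)
  then show ?thesis using U(3) by simp
qed

lemma rv_NT:
  assumes "inNT i"
  shows "card (UU i) \<le> the_enat (rv i)"
proof -
  have NTU: "NT (UU i)" "i \<in> UU i" using UU[OF assms] by auto
  have iV: "i \<in> V" using NTU NT_sub by blast
  obtain U d j where U: "initial_comp V E U" "j \<in> U" "(j,i) \<in> R^^d" "rv i = enat (d + card U)"
    using rv_min[OF iV] by blast
  have "(j,i) \<in> R\<^sup>*" using U(3) by (rule relpow_imp_rtrancl)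
  then have "j \<in> UU i" using initial_closed[of V E "UU i" j i] NTU Esub by (auto simp: NT_def)
  then have "U = UU i" using U(1,2) NTU strong_comp_eq unfolding NT_def initial_comp_def by blast
  then show ?thesis using U(4) by simp
qed

lemma rv_par:
  assumes iV: "i \<in> V" and nNT: "\<not> inNT i" and G: "Gin i \<noteq> {}"
  shows "\<exists>p. (p,i) \<in> R \<and> rv p + 1 \<le> rv i"
proof -
  obtain U d j where U: "initial_comp V E U" "j \<in> U" "(j,i) \<in> R^^d" "rv i = enat (d + card U)"
    using rv_min[OF iV] by blast
  show ?thesis
  proof (cases d)
    case 0
    then have "j = i" using U(3) by simp
    then have "i \<in> U" using U(2) by simp
    then have "\<not> NT U" using nNT inNT_def by blast
    then have tr: "card U = 1" "induced E U = {}" using U(1) by (auto simp: NT_def trivial_comp_def)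
    obtain a where "U = {a}" using tr(1) by (rule card_1_singletonE)
    then have "U = {i}" using \<open>i \<in> U\<close> by simp
    obtain p s where ps: "(p,i,s) \<in> E" using G by (auto simp: Gin_def arcrel_def)
    then have "p \<in> V" using Esub by auto
    show ?thesis
    proof (cases "p \<in> U")
      case True
      then have "(p,i,s) \<in> induced E U" using ps \<open>i\<in>U\<close> by (simp add: induced_def)
      then show ?thesis using tr by simp
    next
      case False
      then show ?thesis using U(1) ps \<open>p\<in>V\<close> \<open>i\<in>U\<close> unfolding initial_comp_def by blast
    qed
  next
    case (Suc d')
    then obtain y where y: "(j,y) \<in> R^^d'" "(y,i) \<in> R" using U(3) by (auto elim: relpow_Suc_E)
    have "rv y \<le> enat (d' + card U)" using rv_le[OF U(1,2) y(1)] .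
    then have "rv y + 1 \<le> enat (d' + card U) + 1" by (rule add_right_mono)
    also have "\<dots> = rv i" using U(4) Suc by (simp add: one_enat_def)
    finally show ?thesis using y(2) by blast
  qed
qed

abbreviation RU :: "nat set \<Rightarrow> (nat \<times> nat) set" where "RU U \<equiv> arcrel (induced E U)"

definition dU :: "nat \<Rightarrow> nat" where
  "dU i = (LEAST k. (dw (UU i), i) \<in> (RU (UU i))^^k)"

lemma dU_props:
  assumes "inNT i"
  shows "(dw (UU i), i) \<in> (RU (UU i))^^(dU i) \<and> dU i < card (UU i)"
proof -
  let ?U = "UU i"
  have NTU: "NT ?U" "i \<in> ?U" using UU[OF assms] by auto
  have wU: "dw ?U \<in> ?U" using dpair[OF NTU(1)] by blast
  have sc: "strongly_conn E ?U" using NTU(1) by (simp add: NT_def initial_comp_def strong_comp_def)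
  have "(dw ?U, i) \<in> (RU ?U)\<^sup>*" using sc wU NTU(2) by (simp add: strongly_conn_def)
  then obtain k where k: "(dw ?U, i) \<in> (RU ?U)^^k" using rtrancl_power by blast
  have p: "(dw ?U, i) \<in> (RU ?U)^^(dU i)" unfolding dU_def using k by (rule LeastI)
  have fin: "finite ?U" using NT_sub NTU(1) by blast
  have sub: "RU ?U \<subseteq> ?U \<times> ?U" by (auto simp: arcrel_induced)
  obtain k' where "k' < card ?U" "(dw ?U, i) \<in> (RU ?U)^^k'" using relpow_short[OF fin sub wU p] by blast
  moreover have "dU i \<le> k'" unfolding dU_def using calculation(2) by (rule Least_le)
  ultimately show ?thesis using p by simp
qed

lemma dU_par:
  assumes "inNT i" "\<not> isw i"
  shows "0 < dU i \<and> (\<exists>p. (p,i) \<in> RU (UU i) \<and> dU p < dU i)"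
proof -
  let ?U = "UU i"
  have NTU: "NT ?U" "i \<in> ?U" using UU[OF assms(1)] by auto
  have p: "(dw ?U, i) \<in> (RU ?U)^^(dU i)" using dU_props[OF assms(1)] by blast
  have "dU i \<noteq> 0"
  proof
    assume "dU i = 0"
    then have "dw ?U = i" using p by simp
    then show False using assms by (simp add: isw_def)
  qed
  then obtain d' where d': "dU i = Suc d'" by (cases "dU i") auto
  then obtain y where y: "(dw ?U, y) \<in> (RU ?U)^^d'" "(y,i) \<in> RU ?U" using p by (auto elim: relpow_Suc_E)
  have "y \<in> ?U" using y(2) by (auto simp: arcrel_induced)
  then have "UU y = ?U" using UU_eq[OF NTU(1)] by blast
  then have "dU y \<le> d'" unfolding dU_def using y(1) by (simp add: Least_le)
  then show ?thesis using d' y(2) by auto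
qed

lemma dU_w: "isw i \<Longrightarrow> dU i = 0"
proof -
  assume "isw i"
  then have "(dw (UU i), i) \<in> (RU (UU i))^^0" by (simp add: isw_def)
  then show ?thesis unfolding dU_def by (rule Least_eq_0)
qed

definition par :: "nat \<Rightarrow> nat" where
  "par i = (if inNT i then (SOME p. (p,i) \<in> RU (UU i) \<and> dU p < dU i)
            else (SOME p. (p,i) \<in> R \<and> rv p + 1 \<le> rv i))"

definition mu :: "nat \<Rightarrow> nat" where
  "mu i = (if Gin i = {} \<or> isw i then 0 else if inNT i then dU i else n + the_enat (rv i))"

lemma par_in:
  assumes "inNT i" "\<not> isw i"
  shows "(par i, i) \<in> R \<and> par i \<in> UU i \<and> inNT (par i) \<and> UU (par i) = UU i \<and> dU (par i) < dU i"
proof -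
  define P where "P p \<longleftrightarrow> (p,i) \<in> RU (UU i) \<and> dU p < dU i" for p
  have "\<exists>p. P p" using dU_par[OF assms] by (simp add: P_def)
  then have "P (SOME p. P p)" by (rule someI_ex)
  moreover have "par i = (SOME p. P p)" using assms(1) by (simp add: par_def P_def)
  ultimately have h: "(par i, i) \<in> RU (UU i) \<and> dU (par i) < dU i" by (simp add: P_def)
  then have "par i \<in> UU i" "(par i, i) \<in> R" by (auto simp: arcrel_induced)
  moreover have "NT (UU i)" using UU[OF assms(1)] by blast
  ultimately have "UU (par i) = UU i" "inNT (par i)" using UU_eq inNT_def by blast+
  then show ?thesis using h \<open>par i \<in> UU i\<close> \<open>(par i, i) \<in> R\<close> by blast
qed

lemma par_out:
  assumes "i \<in> V" "\<not> inNT i" "Gin i \<noteq> {}"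
  shows "(par i, i) \<in> R \<and> rv (par i) + 1 \<le> rv i"
proof -
  define P where "P p \<longleftrightarrow> (p,i) \<in> R \<and> rv p + 1 \<le> rv i" for p
  have "\<exists>p. P p" using rv_par[OF assms] by (simp add: P_def)
  then have "P (SOME p. P p)" by (rule someI_ex)
  moreover have "par i = (SOME p. P p)" using assms(2) by (simp add: par_def P_def)
  ultimately show ?thesis by (simp add: P_def)
qed

lemma mu_le_dU: "inNT p \<Longrightarrow> mu p \<le> dU p"
  by (auto simp: mu_def)

lemma par_props:
  assumes iV: "i \<in> V" and G: "Gin i \<noteq> {}" and nw: "\<not> isw i"
  shows "(par i, i) \<in> R \<and> par i \<in> V \<and> mu (par i) < mu i"
proof (cases "inNT i")
  case True
  note pi = par_in[OF True nw]
  have "mu i = dU i" using True G nw by (simp add: mu_def)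
  moreover have "mu (par i) \<le> dU (par i)" using pi mu_le_dU by blast
  ultimately show ?thesis using pi RV by auto
next
  case False
  note po = par_out[OF iV False G]
  have pV: "par i \<in> V" using po RV by auto
  have mi: "mu i = n + the_enat (rv i)" using False G nw by (simp add: mu_def)
  have fi: "rv i = enat (the_enat (rv i))" "1 \<le> the_enat (rv i)" using rv_fin[OF iV] by auto
  have fp: "rv (par i) = enat (the_enat (rv (par i)))" using rv_fin[OF pV] by auto
  have "enat (the_enat (rv (par i))) + enat 1 \<le> enat (the_enat (rv i))"
    using po fi(1) fp by (simp add: one_enat_def)
  then have "the_enat (rv (par i)) + 1 \<le> the_enat (rv i)" by simp
  moreover have "mu (par i) < mu i"
  proof (cases "Gin (par i) = {} \<or> isw (par i)")
    case True then show ?thesis using mi fi by (simp add: mu_def)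
  next
    case F2: False
    show ?thesis
    proof (cases "inNT (par i)")
      case True
      then have "dU (par i) < card (UU (par i))" using dU_props by blast
      moreover have "card (UU (par i)) \<le> n" using UU[OF True] NT_sub by blast
      ultimately show ?thesis using True F2 mi by (simp add: mu_def)
    next
      case F3: False
      then show ?thesis using F2 mi calculation by (simp add: mu_def)
    qed
  qed
  ultimately show ?thesis using po pV by blast
qed

definition tvc :: "(nat \<Rightarrow> int) \<Rightarrow> nat \<Rightarrow> bool" where
  "tvc c i \<longleftrightarrow> (if Gin i = {} then False else if isw i then lit (dv (UU i)) i 0
               else lit (par i) i (c (par i)))"

primrec cf :: "nat \<Rightarrow> nat \<Rightarrow> int" where
  "cf 0 i = 0"
| "cf (Suc k) i = sig i * (if tvc (cf k) i then 1 else 0)"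

definition cfix :: "nat \<Rightarrow> int" where "cfix i = cf (Suc (mu i)) i"
definition tv :: "nat \<Rightarrow> bool" where "tv i \<longleftrightarrow> tvc cfix i"

lemma cf_stable: "i \<in> V \<Longrightarrow> mu i < k \<Longrightarrow> cf k i = cfix i"
proof (induction "mu i" arbitrary: i k rule: less_induct)
  case less
  obtain k' where k': "k = Suc k'" using less.prems(2) by (cases k) auto
  have "tvc (cf k') i = tvc (cf (mu i)) i"
  proof (cases "Gin i = {} \<or> isw i")
    case True then show ?thesis by (auto simp: tvc_def)
  next
    case False
    then have pp: "(par i, i) \<in> R \<and> par i \<in> V \<and> mu (par i) < mu i"
      using par_props less.prems(1) by blast
    have "cf k' (par i) = cfix (par i)" using less.hyps[of "par i" k'] pp less.prems(2) k' by simp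
    moreover have "cf (mu i) (par i) = cfix (par i)" using less.hyps[of "par i" "mu i"] pp by simp
    ultimately show ?thesis using False by (simp add: tvc_def)
  qed
  then show ?case using k' by (simp add: cfix_def)
qed

lemma cfix_eq: "i \<in> V \<Longrightarrow> cfix i = sig i * (if tv i then 1 else 0)"
proof -
  assume iV: "i \<in> V"
  have "tvc (cf (mu i)) i = tvc cfix i"
  proof (cases "Gin i = {} \<or> isw i")
    case True then show ?thesis by (auto simp: tvc_def)
  next
    case False
    then have pp: "(par i, i) \<in> R \<and> par i \<in> V \<and> mu (par i) < mu i"
      using par_props iV by blast
    have "cf (mu i) (par i) = cfix (par i)" using cf_stable pp by blast
    then show ?thesis using False by (simp add: tvc_def)
  qed
  then show ?thesis by (simp add: cfix_def tv_def)
qed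

end

context GG
begin

definition Bf :: "nat \<Rightarrow> (nat \<Rightarrow> int) \<Rightarrow> bool" where
  "Bf i x \<longleftrightarrow> (if tv i then (\<exists>j\<in>Gin i. lit j i (x j)) else (Gin i \<noteq> {} \<and> (\<forall>j\<in>Gin i. lit j i (x j))))"

definition F :: "(nat \<Rightarrow> int) \<Rightarrow> (nat \<Rightarrow> int)" where
  "F x = restrict (\<lambda>i. sig i * (if Bf i x then 1 else 0)) V"

definition Xs :: "(nat \<Rightarrow> int) set" where "Xs = state_space n (\<lambda>_. 0) m"

lemma F_in: "F x \<in> Xs"
  unfolding F_def Xs_def state_space_def using sig_range m_range by (auto simp: PiE_iff)

lemma F_at: "i \<in> V \<Longrightarrow> F x i = sig i * (if Bf i x then 1 else 0)"
  by (simp add: F_def)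

definition settled :: "nat \<Rightarrow> nat \<Rightarrow> bool" where
  "settled t i \<longleftrightarrow> (\<forall>x\<in>Xs. (F ^^ t) x i = cfix i)"

lemma Fpow_Suc: "(F ^^ Suc t) x = (F ^^ t) (F x)"
  unfolding funpow_Suc_right by simp

lemma settled_Suc: "settled t i \<Longrightarrow> settled (Suc t) i"
  unfolding settled_def using F_in Fpow_Suc by simp

lemma settled_mono: "settled t i \<Longrightarrow> t \<le> t' \<Longrightarrow> settled t' i"
proof (induction t' arbitrary: t)
  case 0 then show ?case by simp
next
  case (Suc t')
  show ?case
  proof (cases "t = Suc t'")
    case True then show ?thesis using Suc by simp
  next
    case False
    then have "settled t' i" using Suc by simp
    then show ?thesis by (rule settled_Suc)
  qed
qed

lemma canal:
  assumes "i \<in> V" "p \<in> Gin i" "lit p i (y p) = tv i"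
  shows "F y i = cfix i"
proof -
  have "Bf i y = tv i" using assms(2,3) unfolding Bf_def by auto
  then show ?thesis using assms(1) by (simp add: F_at cfix_eq)
qed

lemma settled_src:
  assumes "i \<in> V" "Gin i = {}"
  shows "settled 1 i"
proof -
  have "\<not> tv i" using assms(2) by (simp add: tv_def tvc_def)
  then have "\<not> Bf i x" for x using assms(2) by (simp add: Bf_def)
  then show ?thesis unfolding settled_def using assms(1) \<open>\<not> tv i\<close> by (simp add: F_at cfix_eq)
qed

lemma settled_w:
  assumes iV: "i \<in> V" and w: "isw i"
  shows "settled 2 i"
proof -
  let ?U = "UU i"
  have NTU: "NT ?U" and iw: "i = dw ?U" using w UU by (auto simp: isw_def)
  let ?v = "dv ?U"
  have vi: "(?v, i) \<in> R" using dpair[OF NTU] iw by simp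
  then have vG: "?v \<in> Gin i" by (simp add: Gin_def)
  have vV: "?v \<in> V" using vi RV by auto
  have tvi: "tv i = lit ?v i 0" using vG w by (auto simp: tv_def tvc_def)
  show ?thesis unfolding settled_def
  proof
    fix x assume "x \<in> Xs"
    let ?y = "F x"
    have yv: "?y ?v = sig ?v * (if Bf ?v x then 1 else 0)" using vV by (rule F_at)
    have "lit ?v i (?y ?v) = lit ?v i 0"
      using killed[OF NTU, of "if Bf ?v x then 1 else 0"] iw yv by (simp del: of_bool_eq)
    then have "F ?y i = cfix i" using canal[OF iV vG] tvi by simp
    moreover have "(F ^^ 2) x = F (F x)" by (simp add: numeral_2_eq_2)
    ultimately show "(F ^^ 2) x i = cfix i" by simp
  qed
qed

lemma settled_step:
  assumes iV: "i \<in> V" and G: "Gin i \<noteq> {}" and nw: "\<not> isw i" and sp: "settled t (par i)"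
  shows "settled (Suc t) i"
proof -
  have pi: "(par i, i) \<in> R" using par_props[OF iV G nw] by blast
  then have pG: "par i \<in> Gin i" by (simp add: Gin_def)
  have tvi: "tv i = lit (par i) i (cfix (par i))" using G nw by (simp add: tv_def tvc_def)
  show ?thesis unfolding settled_def
  proof
    fix x assume x: "x \<in> Xs"
    let ?y = "(F ^^ t) x"
    have "?y (par i) = cfix (par i)" using sp x by (simp add: settled_def)
    then have "F ?y i = cfix i" using canal[OF iV pG] tvi by simp
    then show "(F ^^ Suc t) x i = cfix i" by simp
  qed
qed

lemma settled_NT: "inNT i \<Longrightarrow> settled (2 + dU i) i"
proof (induction "dU i" arbitrary: i rule: less_induct)
  case less
  have iV: "i \<in> V" using UU[OF less.prems] NT_sub by blast
  show ?case
  proof (cases "Gin i = {}")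
    case True
    then show ?thesis using settled_src[OF iV True] settled_mono by simp
  next
    case G: False
    show ?thesis
    proof (cases "isw i")
      case True
      then show ?thesis using settled_w[OF iV True] dU_w by simp
    next
      case False
      note pi = par_in[OF less.prems False]
      have "settled (2 + dU (par i)) (par i)" using less.hyps pi by blast
      then have "settled (Suc (2 + dU (par i))) i" using settled_step[OF iV G False] by blast
      then show ?thesis using pi settled_mono by simp
    qed
  qed
qed

lemma beta_NT: "inNT i \<Longrightarrow> beta V E = 1"
proof -
  assume "inNT i"
  then obtain U where "NT U" by (auto simp: inNT_def)
  then have "\<not> basic V E" by (auto simp: basic_def NT_def)
  then show ?thesis by (simp add: beta_def)
qed

lemma settled_main: "i \<in> V \<Longrightarrow> settled (the_enat (rv i) + beta V E) i"
proof (induction "mu i" arbitrary: i rule: less_induct)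
  case less
  note iV = less.prems
  have r1: "1 \<le> the_enat (rv i)" using rv_fin[OF iV] by blast
  show ?case
  proof (cases "Gin i = {}")
    case True
    then show ?thesis using settled_src[OF iV True] settled_mono r1 by simp
  next
    case G: False
    show ?thesis
    proof (cases "inNT i")
      case True
      have "dU i < card (UU i)" using dU_props[OF True] by blast
      moreover have "card (UU i) \<le> the_enat (rv i)" using rv_NT[OF True] .
      moreover have "beta V E = 1" using beta_NT[OF True] .
      ultimately show ?thesis using settled_NT[OF True] settled_mono by simp
    next
      case False
      then have nw: "\<not> isw i" by (auto simp: isw_def)
      note pp = par_props[OF iV G nw]
      note po = par_out[OF iV False G]
      have "settled (the_enat (rv (par i)) + beta V E) (par i)" using less.hyps pp by blast
      then have s: "settled (Suc (the_enat (rv (par i)) + beta V E)) i" using settled_step[OF iV G nw] by blast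
      have fi: "rv i = enat (the_enat (rv i))" using rv_fin[OF iV] by blast
      have fp: "rv (par i) = enat (the_enat (rv (par i)))" using rv_fin pp by blast
      have "enat (the_enat (rv (par i))) + enat 1 \<le> enat (the_enat (rv i))"
        using po fi fp by (simp add: one_enat_def)
      then have "the_enat (rv (par i)) + 1 \<le> the_enat (rv i)" by simp
      then show ?thesis using s settled_mono by simp
    qed
  qed
qed

lemma lam_eq: "lam V E = Max (rv ` V)"
  by (simp add: lam_rval rv_def)

lemma lam_fin: "lam V E = enat (the_enat (lam V E)) \<and> (\<forall>i\<in>V. the_enat (rv i) \<le> the_enat (lam V E))"
proof -
  have ne: "V \<noteq> {}" using n1 by auto
  have "lam V E \<in> rv ` V" unfolding lam_eq using ne by (intro Max_in) auto
  then obtain i0 where "i0 \<in> V" "lam V E = rv i0" by auto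
  then have f: "lam V E = enat (the_enat (lam V E))" using rv_fin by metis
  have "\<forall>i\<in>V. the_enat (rv i) \<le> the_enat (lam V E)"
  proof
    fix i assume iV: "i \<in> V"
    have "rv i \<le> lam V E" unfolding lam_eq using iV by (intro Max_ge) auto
    then have "enat (the_enat (rv i)) \<le> enat (the_enat (lam V E))" using rv_fin[OF iV] f by simp
    then show "the_enat (rv i) \<le> the_enat (lam V E)" by simp
  qed
  then show ?thesis using f by blast
qed

lemma Xs_PiE: "Xs = PiE V (\<lambda>i. {0..m i})"
  by (simp add: Xs_def state_space_def)

lemma const_final:
  "\<exists>c. \<forall>x\<in>Xs. (F ^^ (the_enat (lam V E) + beta V E)) x = c"
proof -
  let ?T = "the_enat (lam V E) + beta V E"
  have sV: "settled ?T i" if "i \<in> V" for i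
    using settled_main[OF that] lam_fin that settled_mono by simp
  have T1: "1 \<le> ?T"
  proof -
    have "1 \<in> V" using n1 by simp
    have "1 \<le> the_enat (rv 1)" using rv_fin[OF \<open>1 \<in> V\<close>] by (rule conjunct2)
    moreover have "the_enat (rv 1) \<le> the_enat (lam V E)" using lam_fin \<open>1 \<in> V\<close> by simp
    ultimately show ?thesis by linarith
  qed
  have "(F ^^ ?T) x = restrict cfix V" if x: "x \<in> Xs" for x
  proof
    fix i
    obtain t where t: "?T = Suc t" using T1 by (cases ?T) auto
    have inX: "(F ^^ ?T) x \<in> Xs" unfolding t by (simp add: F_in)
    show "(F ^^ ?T) x i = restrict cfix V i"
    proof (cases "i \<in> V")
      case True
      then show ?thesis using sV x by (simp add: settled_def)
    next
      case False
      have inX': "(F ^^ ?T) x \<in> PiE V (\<lambda>i. {0..m i})" using inX Xs_PiE by blast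
      have "(F ^^ ?T) x i = undefined" using PiE_arb[OF inX' False] .
      moreover have "restrict cfix V i = undefined" using False unfolding restrict_def by presburger
      ultimately show ?thesis by simp
    qed
  qed
  then show ?thesis by blast
qed

end

context GG
begin

lemma Bf_cong: "(\<And>k. k \<in> Gin i \<Longrightarrow> x k = y k) \<Longrightarrow> Bf i x = Bf i y"
  unfolding Bf_def by auto

lemma Bf_single:
  assumes "j \<in> Gin i" "\<And>k. k \<in> Gin i \<Longrightarrow> k \<noteq> j \<Longrightarrow> lit k i (y k) \<longleftrightarrow> \<not> tv i"
  shows "Bf i y = lit j i (y j)"
  using assms unfolding Bf_def by auto

lemma Bf_up:
  assumes "j \<in> Gin i" "Bf i (x(j := a)) " "\<not> Bf i x"
  shows "lit j i a \<and> \<not> lit j i (x j)"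
proof -
  have same: "lit k i ((x(j := a)) k) = lit k i (x k)" if "k \<noteq> j" for k using that by simp
  show ?thesis
  proof (cases "tv i")
    case True
    then obtain k where k: "k \<in> Gin i" "lit k i ((x(j := a)) k)" using assms(2) unfolding Bf_def by (simp del: fun_upd_apply; blast)
    have "k = j"
    proof (rule ccontr)
      assume "k \<noteq> j"
      then have "lit k i (x k)" using k(2) same by simp
      then have "Bf i x" using k(1) True unfolding Bf_def by (simp del: fun_upd_apply; blast)
      then show False using assms(3) by simp
    qed
    then show ?thesis using k assms(1,3) True unfolding Bf_def by (simp; blast)
  next
    case False
    then obtain k where k: "k \<in> Gin i" "\<not> lit k i (x k)" using assms(1,3) unfolding Bf_def by (simp del: fun_upd_apply; blast)
    have "k = j"
    proof (rule ccontr)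
      assume "k \<noteq> j"
      then have "\<not> lit k i ((x(j := a)) k)" using k(2) same by simp
      then have "\<not> Bf i (x(j := a))" using k(1) False unfolding Bf_def by (simp del: fun_upd_apply; blast)
      then show False using assms(2) by simp
    qed
    have "\<forall>ja\<in>Gin i. lit ja i ((x(j:=a)) ja)" using assms(2) False unfolding Bf_def by (simp del: fun_upd_apply)
    then have "lit j i ((x(j:=a)) j)" using assms(1) by blast
    moreover have "\<not> lit j i (x j)" using k(2) \<open>k = j\<close> by simp
    ultimately show ?thesis by simp
  qed
qed

lemma Bf_down:
  assumes "j \<in> Gin i" "\<not> Bf i (x(j := a))" "Bf i x"
  shows "\<not> lit j i a \<and> lit j i (x j)"
proof -
  have same: "lit k i ((x(j := a)) k) = lit k i (x k)" if "k \<noteq> j" for k using that by simp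
  show ?thesis
  proof (cases "tv i")
    case True
    then obtain k where k: "k \<in> Gin i" "lit k i (x k)" using assms(3) unfolding Bf_def by (simp del: fun_upd_apply; blast)
    have "k = j"
    proof (rule ccontr)
      assume "k \<noteq> j"
      then have "lit k i ((x(j := a)) k)" using k(2) same by simp
      then have "Bf i (x(j := a))" using k(1) True unfolding Bf_def by (simp del: fun_upd_apply; blast)
      then show False using assms(2) by simp
    qed
    have "\<not> (\<exists>ja\<in>Gin i. lit ja i ((x(j:=a)) ja))" using assms(2) True unfolding Bf_def by (simp del: fun_upd_apply)
    then have "\<not> lit j i ((x(j:=a)) j)" using assms(1) by blast
    moreover have "lit j i (x j)" using k(2) \<open>k = j\<close> by simp
    ultimately show ?thesis by simp
  next
    case False
    then obtain k where k: "k \<in> Gin i" "\<not> lit k i ((x(j := a)) k)" using assms(1,2) unfolding Bf_def by (simp del: fun_upd_apply; blast)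
    have "k = j"
    proof (rule ccontr)
      assume "k \<noteq> j"
      then have "\<not> lit k i (x k)" using k(2) same by simp
      then have "\<not> Bf i x" using k(1) False unfolding Bf_def by (simp del: fun_upd_apply; blast)
      then show False using assms(3) by simp
    qed
    then show ?thesis using k assms(1,3) False unfolding Bf_def by (simp; blast)
  qed
qed

lemma lit_up_pos: "lit j i (a + 1) \<Longrightarrow> \<not> lit j i a \<Longrightarrow> j \<in> Gin i \<Longrightarrow> (j,i,Pos) \<in> E"
  by (auto simp: lit_def dbl_def split: if_splits)

lemma lit_down_neg: "\<not> lit j i (a + 1) \<Longrightarrow> lit j i a \<Longrightarrow> j \<in> Gin i \<Longrightarrow> (j,i,Neg) \<in> E"
proof -
  assume a: "\<not> lit j i (a + 1)" "lit j i a" "j \<in> Gin i"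
  then obtain s where s: "(j,i,s) \<in> E" by (auto simp: Gin_def arcrel_def)
  show ?thesis
  proof (cases "dbl j i")
    case True then show ?thesis by (simp add: dbl_def)
  next
    case False
    then have "(j,i,Pos) \<notin> E" using a(1,2) by (auto simp: lit_def)
    then show ?thesis using s by (cases s) auto
  qed
qed

lemma IG_sub: "interaction_graph n (\<lambda>_. 0) m F \<subseteq> E"
proof
  fix t assume "t \<in> interaction_graph n (\<lambda>_. 0) m F"
  then obtain j i s x where t: "t = (j,i,s)" and V: "j \<in> V" "i \<in> V" and x: "x \<in> Xs" "x j < m j"
    and d: "case s of Pos \<Rightarrow> F (x(j := x j + 1)) i - F x i > 0 | Neg \<Rightarrow> F (x(j := x j + 1)) i - F x i < 0"
    unfolding interaction_graph_def Xs_def by blast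
  let ?x' = "x(j := x j + 1)"
  have Fd: "F ?x' i - F x i = sig i * ((if Bf i ?x' then 1 else 0) - (if Bf i x then 1 else 0))"
    using V by (simp add: F_at algebra_simps)
  have jG: "j \<in> Gin i"
  proof (rule ccontr)
    assume "j \<notin> Gin i"
    then have "Bf i ?x' = Bf i x" by (intro Bf_cong) auto
    then show False using d Fd by (cases s) auto
  qed
  have sp: "1 \<le> sig i" using sig_pos jG by blast
  show "t \<in> E"
  proof (cases s)
    case Pos
    then have "Bf i ?x' \<and> \<not> Bf i x" using d Fd sp by (auto split: if_splits)
    then have "lit j i (x j + 1) \<and> \<not> lit j i (x j)" using Bf_up[OF jG] by blast
    then show ?thesis using lit_up_pos jG t Pos by blast
  next
    case Neg
    then have "\<not> Bf i ?x' \<and> Bf i x" using d Fd sp by (auto split: if_splits)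
    then have "\<not> lit j i (x j + 1) \<and> lit j i (x j)" using Bf_down[OF jG] by blast
    then show ?thesis using lit_down_neg jG t Neg by blast
  qed
qed

definition neutral :: "nat \<Rightarrow> nat \<Rightarrow> int" where
  "neutral i k = (SOME a. 0 \<le> a \<and> a \<le> m k \<and> (lit k i a \<longleftrightarrow> \<not> tv i))"

lemma neutral: "(k,i) \<in> R \<Longrightarrow> 0 \<le> neutral i k \<and> neutral i k \<le> m k \<and> (lit k i (neutral i k) \<longleftrightarrow> \<not> tv i)"
proof -
  assume ki: "(k,i) \<in> R"
  obtain a b where ab: "0 \<le> a" "a \<le> m k" "0 \<le> b" "b \<le> m k" "lit k i a" "\<not> lit k i b"
    using lit_vals[OF ki] by blast
  define P where "P c \<longleftrightarrow> 0 \<le> c \<and> c \<le> m k \<and> (lit k i c \<longleftrightarrow> \<not> tv i)" for c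
  have "\<exists>c. P c" using ab unfolding P_def by (cases "tv i") auto
  then have "P (SOME c. P c)" by (rule someI_ex)
  then show ?thesis unfolding P_def neutral_def by blast
qed

lemma switch_val:
  assumes "(j,i,s) \<in> E"
  shows "\<exists>a. 0 \<le> a \<and> a < m j \<and>
     (case s of Pos \<Rightarrow> lit j i (a+1) \<and> \<not> lit j i a | Neg \<Rightarrow> \<not> lit j i (a+1) \<and> lit j i a)"
proof -
  have ji: "(j,i) \<in> R" using assms by (auto simp: arcrel_def)
  note th = th_ok[OF ji]
  show ?thesis
  proof (cases "dbl j i")
    case True
    have m2: "m j = 2" using dbl_m[OF True] .
    show ?thesis
    proof (cases s)
      case Pos then show ?thesis using True m2 by (intro exI[of _ 0]) (simp add: lit_def)
    next
      case Neg then show ?thesis using True m2 by (intro exI[of _ 1]) (simp add: lit_def)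
    qed
  next
    case False
    show ?thesis
    proof (cases s)
      case Pos
      then have "(j,i,Pos) \<in> E" using assms by simp
      then show ?thesis using False Pos th by (intro exI[of _ "th j - 1"]) (simp add: lit_def)
    next
      case Neg
      then have "(j,i,Pos) \<notin> E" using assms False by (auto simp: dbl_def)
      then show ?thesis using False Neg th by (intro exI[of _ "th j - 1"]) (simp add: lit_def)
    qed
  qed
qed

lemma E_sub: "E \<subseteq> interaction_graph n (\<lambda>_. 0) m F"
proof
  fix t assume tE: "t \<in> E"
  then obtain j i s where t: "t = (j,i,s)" and js: "(j,i,s) \<in> E" by (cases t) auto
  have V: "j \<in> V" "i \<in> V" using js Esub by auto
  have ji: "(j,i) \<in> R" using js by (auto simp: arcrel_def)
  then have jG: "j \<in> Gin i" by (simp add: Gin_def)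
  obtain a where a: "0 \<le> a" "a < m j"
    "case s of Pos \<Rightarrow> lit j i (a+1) \<and> \<not> lit j i a | Neg \<Rightarrow> \<not> lit j i (a+1) \<and> lit j i a"
    using switch_val[OF js] by blast
  define x where "x = restrict (\<lambda>k. if k = j then a else if k \<in> Gin i then neutral i k else 0) V"
  have xX: "x \<in> Xs"
    unfolding Xs_PiE x_def using a neutral m_range by (auto simp: PiE_iff Gin_def)
  let ?x' = "x(j := x j + 1)"
  have xj: "x j = a" using V by (simp add: x_def)
  have oth: "lit k i (y k) \<longleftrightarrow> \<not> tv i" if "y \<in> {x, ?x'}" "k \<in> Gin i" "k \<noteq> j" for k y
  proof -
    have "k \<in> V" using that(2) RV by (auto simp: Gin_def)
    then have "y k = neutral i k" using that by (auto simp: x_def)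
    then show ?thesis using neutral[of k i] that(2) by (simp add: Gin_def)
  qed
  have B1: "Bf i x = lit j i a" using Bf_single[OF jG, of x] oth xj by simp
  have B2: "Bf i ?x' = lit j i (a + 1)" using Bf_single[OF jG, of ?x'] oth xj by simp
  have sp: "1 \<le> sig i" using sig_pos jG by blast
  have Fd: "F ?x' i - F x i = sig i * ((if Bf i ?x' then 1 else 0) - (if Bf i x then 1 else 0))"
    using V by (simp add: F_at algebra_simps)
  have "case s of Pos \<Rightarrow> F ?x' i - F x i > 0 | Neg \<Rightarrow> F ?x' i - F x i < 0"
    using a(3) B1 B2 Fd sp by (cases s) auto
  then show "t \<in> interaction_graph n (\<lambda>_. 0) m F"
    unfolding interaction_graph_def t using V xX a(2) xj unfolding Xs_def by auto
qed

lemma IG_eq: "interaction_graph n (\<lambda>_. 0) m F = E"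
  using IG_sub E_sub by blast

lemma isFDS: "is_FDS n (\<lambda>_. 0) m F"
  unfolding is_FDS_def using m_range F_in unfolding Xs_def by auto

lemma degb: "degree_bounded n (\<lambda>_. 0) m F"
  unfolding degree_bounded_def Let_def IG_eq
proof (intro ballI)
  fix i assume iV: "i \<in> V"
  show "if out_deg E i = 0 \<and> 0 < in_deg E i then card {0..m i} = 2 else card {0..m i} \<le> out_deg E i + 1"
  proof (cases "out_deg E i = 0")
    case True
    then show ?thesis by (simp add: m_def)
  next
    case False
    then have "m i \<le> int (out_deg E i)" by (rule m_le_out)
    then show ?thesis using False m_range[of i] by simp
  qed
qed

end

theorem mainTheorem8:
  fixes n :: nat and E :: "(nat \<times> nat \<times> sign) set"
  assumes "n \<ge> 1"
    and "E \<subseteq> {1..n} \<times> {1..n} \<times> UNIV"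
    and "\<forall>C\<in>ucomps {1..n} E. \<not> signed_cycle C (induced E C)"
  shows "lam {1..n} E = Max ((\<lambda>C. lam C (induced E C)) ` ucomps {1..n} E)
       \<and> beta {1..n} E = Max ((\<lambda>C. beta C (induced E C)) ` ucomps {1..n} E)
       \<and> (\<exists>a b f. is_FDS n a b f \<and> interaction_graph n a b f = E \<and> degree_bounded n a b f \<and>
            (\<exists>c. \<forall>x\<in>state_space n a b.
                 (f ^^ (the_enat (lam {1..n} E) + beta {1..n} E)) x = c))"
proof -
  interpret G: GG n E using assms by unfold_locales
  have fin: "finite {1..n}" by simp
  have ne: "{1..n} \<noteq> {}" using assms(1) by simp
  have l: "lam {1..n} E = Max ((\<lambda>C. lam C (induced E C)) ` ucomps {1..n} E)"
    using lam_components[OF fin assms(2) ne] .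
  have b: "beta {1..n} E = Max ((\<lambda>C. beta C (induced E C)) ` ucomps {1..n} E)"
    using beta_components[OF fin assms(2) ne] .
  have "is_FDS n (\<lambda>_. 0) G.m G.F \<and> interaction_graph n (\<lambda>_. 0) G.m G.F = E \<and> degree_bounded n (\<lambda>_. 0) G.m G.F \<and>
            (\<exists>c. \<forall>x\<in>state_space n (\<lambda>_. 0) G.m.
                 (G.F ^^ (the_enat (lam {1..n} E) + beta {1..n} E)) x = c)"
    using G.isFDS G.IG_eq G.degb G.const_final unfolding G.Xs_def by blast
  then show ?thesis using l b by blast
qed

end
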